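(* Let $X$ be a real Hilbert space, let $B\colon X\rightrightarrows X$ be maximally $\beta$-monotone with $\beta\ge0$, and let $C\colon X\to X$ be $\sigma$-cocoercive. Let $\gamma\in\,]0,4\sigma[$, $\eta\in\,]0,2-\frac\gamma{2\sigma}[$, and $T_{\rm FB}:=(1-\eta)\mathrm{Id}+\eta J_{\gamma B}(\mathrm{Id}-\gamma C)$. Let $x_0\in X$ and $x_{n+1}:=T_{\rm FB}x_n$. Then: (i) For all $x,y\in X$, $$\|T_{\rm FB}x-T_{\rm FB}y\|^2\le\|x-y\|^2-\Big(\frac{4\sigma-\gamma}{2\eta\sigma}-1\Big)\|(\mathrm{Id}-T_{\rm FB})x-(\mathrm{Id}-T_{\rm FB})y\|^2-\frac{\gamma}{2\eta\sigma}\|(\mathrm{Id}-T_{\rm FB})x-(\mathrm{Id}-T_{\rm FB})y-2\eta\sigma(Cx-Cy)\|^2;$$ in particular $T_{\rm FB}$ is $\frac{2\eta\sigma}{4\sigma-\gamma}$-averaged. (ii) If $\operatorname{zer}(B+C)\neq\varnothing$, then $\|x_n-T_{\rm FB}x_n\|=o(1/\sqrt n)$, $(x_n)$ converges weakly to some $x^*\in\operatorname{zer}(B+C)$, $(Cx_n)$ converges strongly to $Cx^*$, and $C(\operatorname{zer}(B+C))=\{Cx^*\}$. If additionally $\beta>0$, then $(x_n)$ converges strongly to $x^*$ and $\operatorname{zer}(B+C)=\{x^*\}$.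
   Context: $J_B:=(\mathrm{Id}+B)^{-1}$; $\operatorname{zer}B:=\{x:0\in Bx\}$. $B$ is maximally $\beta$-monotone if $\langle x-y,u-v\rangle\ge\beta\|x-y\|^2$ for all $(x,u),(y,v)\in\operatorname{gra}B$ and no operator with this property has a graph properly containing $\operatorname{gra}B$. $C$ is $\sigma$-cocoercive if $\langle x-y,Cx-Cy\rangle\ge\sigma\|Cx-Cy\|^2$. $T$ is $\theta$-averaged ($\theta\in(0,1)$) if $T=(1-\theta)\mathrm{Id}+\theta N$ with $N$ nonexpansive. *)

theory Defs
  imports "HOL-Analysis.Analysis" "HOL-Library.Landau_Symbols"
begin

text \<open>Set-valued operators on X are modelled as functions 'a \<Rightarrow> 'a set;
  the graph of B is {(x,u). u \<in> B x}.\<close>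

definition beta_monotone :: "real \<Rightarrow> ('a::real_inner \<Rightarrow> 'a set) \<Rightarrow> bool" where
  "beta_monotone \<beta> B \<longleftrightarrow>
     (\<forall>x y u v. u \<in> B x \<longrightarrow> v \<in> B y \<longrightarrow> inner (x - y) (u - v) \<ge> \<beta> * (norm (x - y))^2)"

definition max_beta_monotone :: "real \<Rightarrow> ('a::real_inner \<Rightarrow> 'a set) \<Rightarrow> bool" where
  "max_beta_monotone \<beta> B \<longleftrightarrow> beta_monotone \<beta> B \<and>
     (\<forall>B'. beta_monotone \<beta> B' \<and> (\<forall>x. B x \<subseteq> B' x) \<longrightarrow> B' = B)"

definition cocoercive :: "real \<Rightarrow> ('a::real_inner \<Rightarrow> 'a) \<Rightarrow> bool" where
  "cocoercive \<sigma> C \<longleftrightarrow> (\<forall>x y. inner (x - y) (C x - C y) \<ge> \<sigma> * (norm (C x - C y))^2)"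

definition nonexpansive :: "('a::real_normed_vector \<Rightarrow> 'a) \<Rightarrow> bool" where
  "nonexpansive N \<longleftrightarrow> (\<forall>x y. norm (N x - N y) \<le> norm (x - y))"

definition averaged :: "real \<Rightarrow> ('a::real_normed_vector \<Rightarrow> 'a) \<Rightarrow> bool" where
  "averaged \<theta> T \<longleftrightarrow> 0 < \<theta> \<and> \<theta> < 1 \<and>
     (\<exists>N. nonexpansive N \<and> (\<forall>x. T x = (1 - \<theta>) *\<^sub>R x + \<theta> *\<^sub>R N x))"

text \<open>Scalar multiple \<gamma>B and resolvent J_{\<gamma>B} = (Id + \<gamma>B)^{-1}, as a relation and
  as a function (single-valued with full domain for maximally monotone B, by Minty).\<close>

definition op_scale :: "real \<Rightarrow> ('a::real_vector \<Rightarrow> 'a set) \<Rightarrow> 'a \<Rightarrow> 'a set" where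
  "op_scale \<gamma> B x = (\<lambda>u. \<gamma> *\<^sub>R u) ` B x"

definition resolvent :: "('a::real_vector \<Rightarrow> 'a set) \<Rightarrow> 'a \<Rightarrow> 'a" where
  "resolvent A x = (THE p. x \<in> (\<lambda>u. p + u) ` A p)"

definition op_sum :: "('a::real_vector \<Rightarrow> 'a set) \<Rightarrow> ('a \<Rightarrow> 'a) \<Rightarrow> 'a \<Rightarrow> 'a set" where
  "op_sum B C x = (\<lambda>u. u + C x) ` B x"

definition zer :: "('a::real_vector \<Rightarrow> 'a set) \<Rightarrow> 'a set" where
  "zer A = {x. 0 \<in> A x}"

definition weakly_converges :: "(nat \<Rightarrow> 'a::real_inner) \<Rightarrow> 'a \<Rightarrow> bool" where
  "weakly_converges x l \<longleftrightarrow> (\<forall>y. (\<lambda>n. inner (x n) y) \<longlonglongrightarrow> inner l y)"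

end

theory Submission
  imports Defs
begin


lemma par_mid:
  fixes q m :: "'a::real_inner"
  shows "(norm (q - m))^2 = 2*(norm q)^2 + 2*(norm m)^2 - 4*(norm ((1/2) *\<^sub>R (q + m)))^2"
  by (simp add: power2_norm_eq_inner inner_diff inner_add algebra_simps inner_commute)

lemma minnorm_close:
  fixes S :: "'a::real_inner set"
  assumes "convex S" "m \<in> S" "q \<in> S" "\<And>s. s \<in> S \<Longrightarrow> d \<le> norm s" "0 \<le> d"
  shows "(norm (q - m))^2 \<le> 2*(norm q)^2 + 2*(norm m)^2 - 4*d^2"
proof -
  have "(1/2) *\<^sub>R (q + m) \<in> S"
    using assms(1-3) unfolding convex_def
    by (metis (no_types, lifting) add_divide_distrib field_sum_of_halves scaleR_add_right
        divide_nonneg_nonneg zero_le_numeral zero_le_one)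
  then have "d \<le> norm ((1/2) *\<^sub>R (q + m))" using assms(4) by blast
  then have "d^2 \<le> (norm ((1/2) *\<^sub>R (q + m)))^2" using assms(5) by (simp add: power_mono)
  then show ?thesis using par_mid[of q m] by linarith
qed

lemma min_norm_exists:
  fixes S :: "'a::{real_inner,complete_space} set"
  assumes "closed S" "convex S" "S \<noteq> {}"
  shows "\<exists>m\<in>S. \<forall>s\<in>S. norm m \<le> norm s"
proof -
  define d where "d = Inf (norm ` S)"
  have bdd: "bdd_below (norm ` S)" by (rule bdd_belowI[of _ 0]) auto
  have dle: "d \<le> norm s" if "s \<in> S" for s unfolding d_def using bdd that by (simp add: cInf_lower)
  have d0: "0 \<le> d" unfolding d_def using assms(3) by (auto intro!: cInf_greatest)
  have "\<exists>s\<in>S. norm s < d + 1/(Suc n)" for n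
  proof -
    have "Inf (norm ` S) < d + 1/(Suc n)" unfolding d_def by simp
    then show ?thesis using assms(3) by (subst (asm) cInf_less_iff) (auto simp: bdd)
  qed
  then obtain s where sS: "\<And>n. s n \<in> S" and sn: "\<And>n. norm (s n) < d + 1/(Suc n)" by metis
  have key: "(norm (s m - s n))^2 \<le> 2*(d + 1/Suc m)^2 + 2*(d + 1/Suc n)^2 - 4*d^2" for m n
  proof -
    have "(norm (s m - s n))^2 \<le> 2*(norm (s m))^2 + 2*(norm (s n))^2 - 4*d^2"
      by (rule minnorm_close[OF assms(2) sS sS dle d0]) auto
    moreover have "(norm (s m))^2 \<le> (d + 1/Suc m)^2"
      using sn[of m] by (intro power_mono) auto
    moreover have "(norm (s n))^2 \<le> (d + 1/Suc n)^2"
      using sn[of n] by (intro power_mono) auto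
    ultimately show ?thesis by linarith
  qed
  have "Cauchy s"
  proof (rule CauchyI)
    fix e :: real assume e: "0 < e"
    define M where "M = nat (ceiling ((8*d + 4) / e^2))"
    have "norm (s m - s n) < e" if "m \<ge> M" "n \<ge> M" for m n
    proof -
      have bnd: "1/Suc k \<le> 1/Suc M" if "k \<ge> M" for k
        using that by (simp add: frac_le)
      have b1: "1/Suc M \<le> 1" by simp
      have "2*(d + 1/Suc m)^2 + 2*(d + 1/Suc n)^2 - 4*d^2
          = 4*d*(1/Suc m + 1/Suc n) + 2*(1/Suc m)^2 + 2*(1/Suc n)^2"
        by (simp add: power2_eq_square algebra_simps)
      also have "\<dots> \<le> 4*d*(2/Suc M) + 2*(1/Suc M) + 2*(1/Suc M)"
      proof -
        have sq: "t^2 \<le> t" if "0 \<le> t" "t \<le> 1" for t :: real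
          using that by (simp add: power2_eq_square mult_left_le_one_le)
        have "(1/Suc m)^2 \<le> 1/Suc m" "(1/Suc n)^2 \<le> 1/Suc n"
          by (rule sq; simp)+
        moreover have "1/Suc m + 1/Suc n \<le> 2/Suc M" using bnd[OF that(1)] bnd[OF that(2)] by simp
        ultimately show ?thesis using bnd[OF that(1)] bnd[OF that(2)] d0
          by (smt (verit) mult_left_mono)
      qed
      also have "\<dots> = (8*d + 4) / Suc M" by (simp add: add_divide_distrib)
      also have "\<dots> < e^2"
      proof -
        have "(8*d+4)/e^2 \<le> M" unfolding M_def by linarith
        then have "(8*d+4) \<le> M * e^2" using e by (simp add: divide_le_eq)
        also have "\<dots> < Suc M * e^2" using e by simp
        finally show ?thesis using e by (simp add: divide_less_eq mult.commute)
      qed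
      finally have "(norm (s m - s n))^2 < e^2" using key[of m n] by linarith
      then show ?thesis using e by (simp add: power_less_imp_less_base)
    qed
    then show "\<exists>M. \<forall>m\<ge>M. \<forall>n\<ge>M. norm (s m - s n) < e" by blast
  qed
  then obtain m where lim: "s \<longlonglongrightarrow> m" using Cauchy_convergent_iff convergent_def by blast
  have mS: "m \<in> S" using closed_sequentially[OF assms(1)] sS lim by blast
  have "norm m \<le> d"
  proof (rule tendsto_le[OF sequentially_bot])
    show "(\<lambda>n. norm (s n)) \<longlonglongrightarrow> norm m" using lim by (rule tendsto_norm)
    show "(\<lambda>n. d + 1/Suc n) \<longlonglongrightarrow> d"
      using tendsto_add[OF tendsto_const LIMSEQ_inverse_real_of_nat, of d]
      by (simp add: inverse_eq_divide)
    show "\<forall>\<^sub>F n in sequentially. norm (s n) \<le> d + 1/Suc n" using sn by (simp add: less_imp_le)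
  qed
  then show ?thesis using mS dle by force
qed



lemma sq_diff_bound:
  fixes x D t :: real
  assumes "0 \<le> x" "x \<le> D" "D - x < t"
  shows "D^2 - x^2 \<le> 2*D*t"
proof -
  have "D^2 - x^2 = (D - x)*(D + x)" by (simp add: power2_eq_square algebra_simps)
  also have "\<dots> \<le> t * (2*D)" using assms by (intro mult_mono) auto
  finally show ?thesis by (metis mult.assoc mult.commute)
qed

lemma Cauchy_sq_bound:
  fixes X :: "nat \<Rightarrow> 'a::real_normed_vector"
  assumes "\<And>M m n. M \<le> m \<Longrightarrow> M \<le> n \<Longrightarrow> (norm (X m - X n))^2 \<le> b M" "b \<longlonglongrightarrow> 0"
  shows "Cauchy X"
proof (rule CauchyI)
  fix e :: real assume e: "0 < e"
  then have "e^2 > 0" by simp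
  then have "\<forall>\<^sub>F M in sequentially. b M < e^2" using assms(2) by (rule order_tendstoD(2)[rotated])
  then obtain M where "b M < e^2" by (auto simp: eventually_sequentially)
  then have "norm (X m - X n) < e" if "m \<ge> M" "n \<ge> M" for m n
    using assms(1)[OF that] e by (smt (verit) power_less_imp_less_base)
  then show "\<exists>M. \<forall>m\<ge>M. \<forall>n\<ge>M. norm (X m - X n) < e" by blast
qed

lemma fip_closed_convex:
  fixes FF :: "'a::{real_inner,complete_space} set set"
  assumes FF: "\<And>S. S \<in> FF \<Longrightarrow> closed S \<and> convex S \<and> bounded S"
    and fin: "\<And>G. G \<subseteq> FF \<Longrightarrow> finite G \<Longrightarrow> G \<noteq> {} \<Longrightarrow> \<Inter>G \<noteq> {}"
  shows "\<Inter>FF \<noteq> {}"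
proof (cases "FF = {}")
  case True then show ?thesis by simp
next
  case False
  then obtain F0 where F0: "F0 \<in> FF" by blast
  obtain R where R: "\<And>s. s \<in> F0 \<Longrightarrow> norm s \<le> R"
    using FF[OF F0] bounded_iff by metis
  define K where "K G = \<Inter>(insert F0 G)" for G
  define mn where "mn S = (SOME m. m \<in> S \<and> (\<forall>s\<in>S. norm m \<le> norm s))" for S :: "'a set"
  define dd where "dd G = norm (mn (K G))" for G
  have Kprops: "closed (K G) \<and> convex (K G) \<and> K G \<noteq> {}" if "G \<subseteq> FF" "finite G" for G
  proof -
    have "closed (K G)" unfolding K_def using FF F0 that(1) by (intro closed_Inter) auto
    moreover have "convex (K G)" unfolding K_def using FF F0 that(1) by (intro convex_Inter) auto
    moreover have "K G \<noteq> {}" unfolding K_def using fin[of "insert F0 G"] F0 that by auto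
    ultimately show ?thesis by blast
  qed
  have mnp: "mn (K G) \<in> K G \<and> (\<forall>s\<in>K G. norm (mn (K G)) \<le> norm s)" if "G \<subseteq> FF" "finite G" for G
  proof -
    from min_norm_exists[of "K G"] Kprops[OF that]
    have "\<exists>m. m \<in> K G \<and> (\<forall>s\<in>K G. norm m \<le> norm s)" by blast
    then show ?thesis unfolding mn_def by (rule someI_ex)
  qed
  have KF0: "K G \<subseteq> F0" for G unfolding K_def by auto
  have Kmono: "G \<subseteq> G' \<Longrightarrow> K G' \<subseteq> K G" for G G' unfolding K_def by auto
  have ddR: "dd G \<le> R" if "G \<subseteq> FF" "finite G" for G
    using mnp[OF that] KF0 R unfolding dd_def by blast
  have ddmono: "dd G \<le> dd G'" if "G \<subseteq> G'" "G' \<subseteq> FF" "finite G'" for G G'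
  proof -
    have "finite G" "G \<subseteq> FF" using that finite_subset by auto
    with mnp mnp[OF that(2,3)] Kmono[OF that(1)] show ?thesis unfolding dd_def by blast
  qed
  define DS where "DS = {dd G | G. G \<subseteq> FF \<and> finite G}"
  define D where "D = Sup DS"
  have DSne: "DS \<noteq> {}" unfolding DS_def by blast
  have DSbdd: "bdd_above DS" unfolding DS_def using ddR by (auto intro!: bdd_aboveI)
  have ddD: "dd G \<le> D" if "G \<subseteq> FF" "finite G" for G
    unfolding D_def using that DSbdd by (intro cSup_upper) (auto simp: DS_def)
  have D0: "0 \<le> D" using ddD[of "{}"] unfolding dd_def by (smt (verit) empty_subsetI finite.emptyI norm_ge_zero)
  have "\<exists>G. G \<subseteq> FF \<and> finite G \<and> D - 1/Suc n < dd G" for n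
  proof -
    have "D - 1/Suc n < Sup DS" unfolding D_def by simp
    then show ?thesis using DSne DSbdd by (subst (asm) less_cSup_iff) (auto simp: DS_def)
  qed
  then obtain G where G: "\<And>n. G n \<subseteq> FF" "\<And>n. finite (G n)" "\<And>n. D - 1/Suc n < dd (G n)" by metis
  define H where "H n = \<Union>(G ` {..n})" for n
  have H: "H n \<subseteq> FF" "finite (H n)" for n unfolding H_def using G by auto
  have Hmono: "m \<le> n \<Longrightarrow> H m \<subseteq> H n" for m n unfolding H_def by (intro UN_mono) auto
  have HD: "D - 1/Suc n < dd (H n)" for n
    using G(3)[of n] ddmono[of "G n" "H n"] H[of n] unfolding H_def by fastforce
  define p where "p n = mn (K (H n))" for n
  have close: "(norm (q - p n))^2 \<le> 4*D/Suc n" if "q \<in> K (H n)" "norm q \<le> D" for q n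
  proof -
    have m1: "p n \<in> K (H n)" "\<And>s. s \<in> K (H n) \<Longrightarrow> dd (H n) \<le> norm s"
      using mnp[OF H] unfolding p_def dd_def by auto
    have "(norm (q - p n))^2 \<le> 2*(norm q)^2 + 2*(norm (p n))^2 - 4*(dd (H n))^2"
      by (rule minnorm_close[OF _ m1(1) that(1) m1(2)]) (use Kprops[OF H] in \<open>auto simp: dd_def\<close>)
    also have "\<dots> = 2*(norm q)^2 - 2*(dd (H n))^2" unfolding dd_def p_def by simp
    also have "\<dots> \<le> 2*(D^2 - (dd (H n))^2)" using that(2) by (simp add: power_mono)
    also have "\<dots> \<le> 2*(2*D*(1/Suc n))"
      using sq_diff_bound[of "dd (H n)" D "1/Suc n"] HD[of n] ddD[OF H] by (simp add: dd_def)
    finally show ?thesis by simp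
  qed
  have lim0: "(\<lambda>n. 4*D/Suc n) \<longlonglongrightarrow> 0"
    using tendsto_mult[OF tendsto_const LIMSEQ_inverse_real_of_nat, of "4*D"]
    by (simp add: inverse_eq_divide)
  have pK: "p n \<in> K (H n)" and pD: "norm (p n) \<le> D" for n
    using mnp[OF H] ddD[OF H] unfolding p_def dd_def by auto
  have "Cauchy p"
  proof (rule Cauchy_sq_bound[OF _ lim0])
    fix M m n :: nat assume mn: "M \<le> m" "M \<le> n"
    have b: "4*D/Suc k \<le> 4*D/Suc M" if "M \<le> k" for k
      using that D0 by (intro divide_left_mono) auto
    show "(norm (p m - p n))^2 \<le> 4*D/Suc M"
    proof (cases "n \<le> m")
      case True
      then have "p m \<in> K (H n)" using pK[of m] Kmono[OF Hmono[OF True]] by blast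
      then show ?thesis using close[of "p m" n] pD b[OF mn(2)] by fastforce
    next
      case False
      then have "p n \<in> K (H m)" using pK[of n] Kmono[OF Hmono, of m n] by auto
      then show ?thesis using close[of "p n" m] pD b[OF mn(1)] by (fastforce simp: norm_minus_commute)
    qed
  qed
  then obtain P where P: "p \<longlonglongrightarrow> P" using Cauchy_convergent_iff convergent_def by blast
  have "P \<in> F" if F: "F \<in> FF" for F
  proof -
    define q where "q n = mn (K (insert F (H n)))" for n
    have H': "insert F (H n) \<subseteq> FF" "finite (insert F (H n))" for n using H F by auto
    have qF: "q n \<in> F" and qK: "q n \<in> K (H n)" and qD: "norm (q n) \<le> D" for n
      using mnp[OF H'] ddD[OF H'] unfolding q_def dd_def K_def by auto
    have "(\<lambda>n. q n - p n) \<longlonglongrightarrow> 0"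
    proof (rule Lim_null_comparison)
      show "\<forall>\<^sub>F n in sequentially. norm (q n - p n) \<le> sqrt (4*D/Suc n)"
        using close[OF qK qD] by (intro always_eventually allI real_le_rsqrt) auto
      show "(\<lambda>n. sqrt (4*D/Suc n)) \<longlonglongrightarrow> 0" using tendsto_real_sqrt[OF lim0] by simp
    qed
    then have "q \<longlonglongrightarrow> P" using tendsto_add[OF _ P] by fastforce
    then show ?thesis using closed_sequentially[of F] FF[OF F] qF by blast
  qed
  then show ?thesis by blast
qed

lemma nested_closed_convex:
  fixes K :: "nat \<Rightarrow> 'a::{real_inner,complete_space} set"
  assumes "\<And>n. closed (K n)" "\<And>n. convex (K n)" "\<And>n. K n \<noteq> {}" "bounded (K 0)"
    "\<And>n. K (Suc n) \<subseteq> K n"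
  shows "\<Inter>(range K) \<noteq> {}"
proof -
  have dec: "K n \<subseteq> K m" if "m \<le> n" for m n
    using that
  proof (induction rule: dec_induct)
    case (step k) then show ?case using assms(5)[of k] by blast
  qed simp
  have bd: "bounded (K n)" for n using bounded_subset[OF assms(4) dec[of 0 n]] by simp
  show ?thesis
  proof (rule fip_closed_convex)
    fix S assume "S \<in> range K" then show "closed S \<and> convex S \<and> bounded S" using assms bd by auto
  next
    fix G assume G: "G \<subseteq> range K" "finite G" "G \<noteq> {}"
    then obtain I where I: "finite I" "G = K ` I" "I \<noteq> {}" by (metis finite_subset_image image_is_empty)
    have "K (Max I) \<subseteq> \<Inter>G" using I dec Max_ge by blast
    then show "\<Inter>G \<noteq> {}" using assms(3) by blast
  qed
qed



lemma nsq_diff: "(norm (u - v))^2 = (norm u)^2 - 2 * inner u v + (norm (v::'a::real_inner))^2"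
  by (simp add: power2_norm_eq_inner inner_diff inner_commute)

lemma nsq_add: "(norm (u + v))^2 = (norm u)^2 + 2 * inner u v + (norm (v::'a::real_inner))^2"
  by (simp add: power2_norm_eq_inner inner_add inner_commute)

lemma nsq_scale: "(norm (t *\<^sub>R (v::'a::real_inner)))^2 = t^2 * (norm v)^2"
  by (simp add: power_mult_distrib)

lemma proj_char:
  fixes y q k :: "'a::real_inner"
  assumes "convex K" "q \<in> K" "\<And>k. k \<in> K \<Longrightarrow> norm (y - q) \<le> norm (y - k)" "k \<in> K"
  shows "inner (y - q) (k - q) \<le> 0"
proof (rule ccontr)
  define a where "a = inner (y - q) (k - q)"
  define N where "N = (norm (k - q))^2"
  assume "\<not> ?thesis" then have a0: "a > 0" unfolding a_def by simp
  have N0: "N \<ge> 0" unfolding N_def by simp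
  define t where "t = min 1 (a / (N + 1))"
  have t0: "0 < t" "t \<le> 1" unfolding t_def using a0 N0 by auto
  have "(1 - t) *\<^sub>R q + t *\<^sub>R k \<in> K" using assms(1,2,4) t0 unfolding convex_def by auto
  then have "norm (y - q) \<le> norm (y - ((1 - t) *\<^sub>R q + t *\<^sub>R k))" by (rule assms(3))
  also have "y - ((1 - t) *\<^sub>R q + t *\<^sub>R k) = (y - q) - t *\<^sub>R (k - q)" by (simp add: algebra_simps)
  finally have "(norm (y - q))^2 \<le> (norm ((y - q) - t *\<^sub>R (k - q)))^2" by (simp add: power_mono)
  also have "\<dots> = (norm (y - q))^2 - 2 * t * a + t^2 * N"
    unfolding a_def N_def nsq_diff nsq_scale by simp
  finally have "2 * t * a \<le> t^2 * N" by simp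
  then have "2 * a \<le> t * N" using t0 by (simp add: power2_eq_square)
  moreover have "t * N \<le> a / (N + 1) * N" unfolding t_def using N0 by (intro mult_right_mono) auto
  moreover have "a / (N + 1) * N < a" using a0 N0 by (simp add: field_simps)
  ultimately show False using a0 by linarith
qed

lemma continuous_on_Max_fin:
  fixes f :: "'i \<Rightarrow> 'a::topological_space \<Rightarrow> real"
  assumes "finite G" "G \<noteq> {}" "\<And>i. i \<in> G \<Longrightarrow> continuous_on S (f i)"
  shows "continuous_on S (\<lambda>y. Max ((\<lambda>i. f i y) ` G))"
  using assms
proof (induction G rule: finite_ne_induct)
  case (singleton x) then show ?case by simp
next
  case (insert x F)
  have "continuous_on S (\<lambda>y. max (f x y) (Max ((\<lambda>i. f i y) ` F)))"
    using insert by (intro continuous_on_max) auto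
  then show ?case using insert by simp
qed

lemma double_sum_id:
  fixes f :: "'b \<Rightarrow> 'a::real_inner"
  assumes "finite V" "sum \<mu> V = 1"
  shows "(\<Sum>v\<in>V. \<Sum>w\<in>V. \<mu> v * \<mu> w * (norm (f v - f w))^2)
       = 2 * (\<Sum>v\<in>V. \<mu> v * (norm (f v - z))^2) - 2 * (norm (\<Sum>v\<in>V. \<mu> v *\<^sub>R (f v - z)))^2"
proof -
  define a where "a v = f v - z" for v
  have e: "(norm (f v - f w))^2 = (norm (a v))^2 + (norm (a w))^2 - 2 * inner (a v) (a w)" for v w
  proof -
    have "f v - f w = a v - a w" unfolding a_def by simp
    then show ?thesis by (simp add: power2_norm_eq_inner inner_diff inner_commute)
  qed
  have s1: "(\<Sum>v\<in>V. \<Sum>w\<in>V. \<mu> v * \<mu> w * (norm (a v))^2) = (\<Sum>v\<in>V. \<mu> v * (norm (a v))^2)"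
    by (simp add: sum_distrib_left[symmetric] sum_distrib_right[symmetric] assms(2) mult.commute mult.left_commute)
  have s2: "(\<Sum>v\<in>V. \<Sum>w\<in>V. \<mu> v * \<mu> w * (norm (a w))^2) = (\<Sum>v\<in>V. \<mu> v * (norm (a v))^2)"
  proof -
    have "(\<Sum>v\<in>V. \<Sum>w\<in>V. \<mu> v * \<mu> w * (norm (a w))^2) = (\<Sum>v\<in>V. \<mu> v * (\<Sum>w\<in>V. \<mu> w * (norm (a w))^2))"
      by (simp add: sum_distrib_left mult.assoc)
    also have "\<dots> = (\<Sum>w\<in>V. \<mu> w * (norm (a w))^2)"
      by (simp add: sum_distrib_right[symmetric] assms(2))
    finally show ?thesis .
  qed
  have s3: "(\<Sum>v\<in>V. \<Sum>w\<in>V. \<mu> v * \<mu> w * inner (a v) (a w)) = (norm (\<Sum>v\<in>V. \<mu> v *\<^sub>R a v))^2"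
    by (simp add: power2_norm_eq_inner inner_sum_left inner_sum_right sum_distrib_left mult.assoc)
       (simp add: inner_commute)
  have "(\<Sum>v\<in>V. \<Sum>w\<in>V. \<mu> v * \<mu> w * (norm (f v - f w))^2)
      = (\<Sum>v\<in>V. \<Sum>w\<in>V. \<mu> v * \<mu> w * (norm (a v))^2 + \<mu> v * \<mu> w * (norm (a w))^2 - 2 * (\<mu> v * \<mu> w * inner (a v) (a w)))"
    by (simp add: e algebra_simps)
  also have "\<dots> = (\<Sum>v\<in>V. \<Sum>w\<in>V. \<mu> v * \<mu> w * (norm (a v))^2) + (\<Sum>v\<in>V. \<Sum>w\<in>V. \<mu> v * \<mu> w * (norm (a w))^2)
      - 2 * (\<Sum>v\<in>V. \<Sum>w\<in>V. \<mu> v * \<mu> w * inner (a v) (a w))"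
    by (simp add: sum.distrib sum_subtractf sum_distrib_left)
  finally show ?thesis by (simp only: s1 s2 s3) (simp add: a_def)
qed



lemma finite_balls:
  fixes c r :: "'i \<Rightarrow> 'a::real_inner" and z :: 'a
  assumes fin: "finite G" and ne: "G \<noteq> {}"
    and lip: "\<And>i j. i \<in> G \<Longrightarrow> j \<in> G \<Longrightarrow> norm (c i - c j) \<le> norm (r i - r j)"
  shows "\<exists>y. \<forall>i\<in>G. norm (y - c i) \<le> norm (z - r i)"
proof -
  define val where "val i y = (norm (y - c i))^2 - (norm (z - r i))^2" for i y
  define g where "g y = Max ((\<lambda>i. val i y) ` G)" for y
  define KK where "KK = convex hull (c ` G)"
  have KKc: "compact KK" "convex KK" "KK \<noteq> {}"
    unfolding KK_def using fin ne by (auto simp: finite_imp_compact_convex_hull convex_convex_hull)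
  have gcont: "continuous_on KK g"
    unfolding g_def val_def by (rule continuous_on_Max_fin[OF fin ne]) (intro continuous_intros)
  obtain y0 where y0: "y0 \<in> KK" "\<And>y. y \<in> KK \<Longrightarrow> g y0 \<le> g y"
    using continuous_attains_inf[OF KKc(1,3) gcont] by blast
  define m where "m = g y0"
  have valle: "val i y \<le> g y" if "i \<in> G" for i y
    unfolding g_def using fin that by (intro Max_ge) auto
  show ?thesis
  proof (cases "m \<le> 0")
    case True
    have "norm (y0 - c i) \<le> norm (z - r i)" if "i \<in> G" for i
    proof -
      have "val i y0 \<le> 0" using valle[OF that, of y0] True unfolding m_def by simp
      then have "(norm (y0 - c i))^2 \<le> (norm (z - r i))^2" unfolding val_def by simp
      then show ?thesis by (rule power2_le_imp_le) simp
    qed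
    then show ?thesis by blast
  next
    case False
    then have m0: "m > 0" by simp
    define I0 where "I0 = {i\<in>G. val i y0 = m}"
    have "m \<in> (\<lambda>i. val i y0) ` G" unfolding m_def g_def using fin ne by (intro Max_in) auto
    then have I0ne: "I0 \<noteq> {}" unfolding I0_def by auto
    have I0sub: "I0 \<subseteq> G" unfolding I0_def by auto
    have I0fin: "finite I0" using finite_subset[OF I0sub fin] .
    have inK0: "y0 \<in> convex hull (c ` I0)"
    proof (rule ccontr)
      assume nin: "y0 \<notin> convex hull (c ` I0)"
      define K0 where "K0 = convex hull (c ` I0)"
      have K0c: "compact K0" "convex K0" "K0 \<noteq> {}"
        unfolding K0_def using I0fin I0ne by (auto simp: finite_imp_compact_convex_hull convex_convex_hull)
      have "continuous_on K0 (\<lambda>k. norm (y0 - k))" by (intro continuous_intros)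
      then obtain q where q: "q \<in> K0" "\<And>k. k \<in> K0 \<Longrightarrow> norm (y0 - q) \<le> norm (y0 - k)"
        using continuous_attains_inf[OF K0c(1,3)] by blast
      have pc: "inner (y0 - q) (k - q) \<le> 0" if "k \<in> K0" for k
        by (rule proj_char[OF K0c(2) q(1) q(2) that])
      define \<delta> where "\<delta> = (norm (q - y0))^2"
      have "q \<noteq> y0" using q(1) nin K0_def by auto
      then have \<delta>0: "\<delta> > 0" unfolding \<delta>_def by simp
      define yt where "yt t = y0 + t *\<^sub>R (q - y0)" for t :: real
      have act: "val i (yt t) \<le> m - (2*t - t^2) * \<delta>" if i: "i \<in> I0" and t: "t \<ge> 0" for i t
      proof -
        have ci: "c i \<in> K0" unfolding K0_def using i by (simp add: hull_inc)
        have "inner (y0 - c i) (q - y0) = - \<delta> + inner (y0 - q) (c i - q)"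
          unfolding \<delta>_def by (simp add: power2_norm_eq_inner inner_diff inner_commute algebra_simps)
        then have ip: "inner (y0 - c i) (q - y0) \<le> - \<delta>" using pc[OF ci] by simp
        have e: "yt t - c i = (y0 - c i) + t *\<^sub>R (q - y0)" unfolding yt_def by simp
        have "(norm (yt t - c i))^2 = (norm (y0 - c i))^2 + 2 * t * inner (y0 - c i) (q - y0) + t^2 * \<delta>"
          unfolding e nsq_add nsq_scale \<delta>_def by (simp add: algebra_simps)
        also have "\<dots> \<le> (norm (y0 - c i))^2 - 2 * t * \<delta> + t^2 * \<delta>"
          using mult_left_mono[OF ip t] by (simp add: mult.commute)
        finally show ?thesis using i unfolding I0_def val_def by (simp add: algebra_simps)
      qed
      have ev: "\<forall>\<^sub>F t in at_right 0. \<forall>i\<in>G. val i (yt t) < m"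
      proof (rule eventually_ball_finite[OF fin], intro ballI)
        fix i assume i: "i \<in> G"
        show "\<forall>\<^sub>F t in at_right 0. val i (yt t) < m"
        proof (cases "i \<in> I0")
          case True
          have "\<forall>\<^sub>F t in at_right (0::real). t < 1"
            by (subst eventually_at_right[of 0 1]) (auto intro!: exI[of _ 1])
          then show ?thesis using eventually_at_right_less[of 0]
          proof eventually_elim
            case (elim t)
            have "(2*t - t^2) * \<delta> > 0" using elim \<delta>0 by (intro mult_pos_pos) (auto simp: power2_eq_square)
            then show ?case using act[OF True, of t] elim by simp
          qed
        next
          case False
          then have lt: "val i y0 < m" using valle[OF i, of y0] i unfolding m_def I0_def by auto
          have "((\<lambda>t. val i (yt t)) \<longlongrightarrow> val i (yt 0)) (at_right 0)"
            unfolding val_def yt_def by (intro tendsto_intros)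
          then have "((\<lambda>t. val i (yt t)) \<longlongrightarrow> val i y0) (at_right 0)" by (simp add: yt_def)
          then show ?thesis using lt by (rule order_tendstoD(2))
        qed
      qed
      moreover have "\<forall>\<^sub>F t in at_right (0::real). t < 1"
        by (subst eventually_at_right[of 0 1]) (auto intro!: exI[of _ 1])
      ultimately have evt: "\<forall>\<^sub>F t in at_right 0. (\<forall>i\<in>G. val i (yt t) < m) \<and> 0 < t \<and> t < 1"
        using eventually_at_right_less[of 0] by eventually_elim auto
      obtain t where t: "\<forall>i\<in>G. val i (yt t) < m" "0 < t" "t < 1"
        using eventually_happens[OF evt] trivial_limit_at_right_real by auto
      have "q \<in> KK" using q(1) unfolding K0_def KK_def by (meson I0sub hull_mono image_mono subsetD)
      then have "(1 - t) *\<^sub>R y0 + t *\<^sub>R q \<in> KK" using KKc(2) y0(1) t unfolding convex_def by auto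
      moreover have "(1 - t) *\<^sub>R y0 + t *\<^sub>R q = yt t" unfolding yt_def by (simp add: algebra_simps)
      ultimately have "g y0 \<le> g (yt t)" using y0(2) by simp
      moreover have "g (yt t) < m" unfolding g_def using fin ne t(1) by (subst Max_less_iff) auto
      ultimately show False unfolding m_def by simp
    qed
    define V where "V = c ` I0"
    have Vfin: "finite V" unfolding V_def using I0fin by simp
    obtain \<mu> where mu: "\<forall>v\<in>V. 0 \<le> \<mu> v" "sum \<mu> V = 1" "(\<Sum>v\<in>V. \<mu> v *\<^sub>R v) = y0"
      using inK0 convex_hull_finite[OF Vfin] unfolding V_def by auto
    define ii where "ii v = (SOME i. i \<in> I0 \<and> c i = v)" for v
    have ii: "ii v \<in> I0" "c (ii v) = v" if "v \<in> V" for v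
    proof -
      have "\<exists>i. i \<in> I0 \<and> c i = v" using that unfolding V_def by auto
      then show "ii v \<in> I0" "c (ii v) = v" unfolding ii_def by (metis (mono_tags, lifting) someI_ex)+
    qed
    define \<rho> where "\<rho> v = (norm (z - r (ii v)))^2" for v
    have vd: "(norm (v - y0))^2 = \<rho> v + m" if "v \<in> V" for v
      using ii[OF that] unfolding I0_def val_def \<rho>_def by (simp add: norm_minus_commute)
    have "(\<Sum>v\<in>V. \<mu> v *\<^sub>R (v - y0)) = 0"
      using mu by (simp add: scaleR_diff_right sum_subtractf scaleR_sum_left[symmetric])
    then have A: "(\<Sum>v\<in>V. \<Sum>w\<in>V. \<mu> v * \<mu> w * (norm (v - w))^2) = 2 * (\<Sum>v\<in>V. \<mu> v * (\<rho> v + m))"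
      using double_sum_id[OF Vfin mu(2), of "\<lambda>v. v" y0] vd by simp
    have "(\<Sum>v\<in>V. \<mu> v * (\<rho> v + m)) = (\<Sum>v\<in>V. \<mu> v * \<rho> v) + m"
      using mu(2) by (simp add: algebra_simps sum.distrib sum_distrib_left[symmetric])
    note A = A[unfolded this]
    have Bd: "(\<Sum>v\<in>V. \<Sum>w\<in>V. \<mu> v * \<mu> w * (norm (r (ii v) - r (ii w)))^2) \<le> 2 * (\<Sum>v\<in>V. \<mu> v * \<rho> v)"
      using double_sum_id[OF Vfin mu(2), of "\<lambda>v. r (ii v)" z] unfolding \<rho>_def
      by (simp add: norm_minus_commute)
    have C: "(\<Sum>v\<in>V. \<Sum>w\<in>V. \<mu> v * \<mu> w * (norm (v - w))^2)
        \<le> (\<Sum>v\<in>V. \<Sum>w\<in>V. \<mu> v * \<mu> w * (norm (r (ii v) - r (ii w)))^2)"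
    proof (intro sum_mono mult_left_mono)
      fix v w assume vw: "v \<in> V" "w \<in> V"
      have "norm (v - w) \<le> norm (r (ii v) - r (ii w))"
        using lip[of "ii v" "ii w"] ii[OF vw(1)] ii[OF vw(2)] I0sub by auto
      then show "(norm (v - w))^2 \<le> (norm (r (ii v) - r (ii w)))^2" by (simp add: power_mono)
      show "0 \<le> \<mu> v * \<mu> w" using mu(1) vw by simp
    qed
    have "2 * ((\<Sum>v\<in>V. \<mu> v * \<rho> v) + m) \<le> 2 * (\<Sum>v\<in>V. \<mu> v * \<rho> v)"
      using order.trans[OF C Bd] unfolding A .
    with m0 have False by (simp add: algebra_simps)
    then show ?thesis ..
  qed
qed



lemma inner_half_sq:
  fixes P Q :: "'a::real_inner"
  shows "inner ((1/2) *\<^sub>R (P + Q)) ((1/2) *\<^sub>R (P - Q)) = ((norm P)^2 - (norm Q)^2) / 4"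
  by (simp add: power2_norm_eq_inner inner_add inner_diff inner_commute algebra_simps)

lemma minty:
  fixes A :: "'a::{real_inner,complete_space} \<Rightarrow> 'a set" and z :: 'a
  assumes mono: "\<And>x y u v. u \<in> A x \<Longrightarrow> v \<in> A y \<Longrightarrow> inner (x - y) (u - v) \<ge> 0"
    and maxi: "\<And>A'. (\<forall>x y u v. u \<in> A' x \<longrightarrow> v \<in> A' y \<longrightarrow> inner (x - y) (u - v) \<ge> 0)
                 \<Longrightarrow> (\<forall>x. A x \<subseteq> A' x) \<Longrightarrow> A' = A"
  shows "\<exists>p. z - p \<in> A p"
proof -
  define GR where "GR = {(a, b). b \<in> A a}"
  define c where "c pr = fst pr - snd pr" for pr :: "'a \<times> 'a"
  define r where "r pr = fst pr + snd pr" for pr :: "'a \<times> 'a"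
  define bl where "bl pr = cball (c pr) (norm (z - r pr))" for pr
  have lip: "norm (c i - c j) \<le> norm (r i - r j)" if "i \<in> GR" "j \<in> GR" for i j
  proof -
    have ij: "snd i \<in> A (fst i)" "snd j \<in> A (fst j)" using that unfolding GR_def by auto
    then have m: "inner (fst i - fst j) (snd i - snd j) \<ge> 0" using mono by blast
    have e1: "c i - c j = (fst i - fst j) - (snd i - snd j)" "r i - r j = (fst i - fst j) + (snd i - snd j)"
      unfolding c_def r_def by (simp_all add: algebra_simps)
    have "(norm (c i - c j))^2 \<le> (norm (r i - r j))^2"
      unfolding e1 nsq_add nsq_diff using m by simp
    then show ?thesis by (rule power2_le_imp_le) simp
  qed
  have "\<Inter>(bl ` GR) \<noteq> {}"
  proof (rule fip_closed_convex)
    fix S assume "S \<in> bl ` GR" then show "closed S \<and> convex S \<and> bounded S" unfolding bl_def by auto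
  next
    fix GG assume GG: "GG \<subseteq> bl ` GR" "finite GG" "GG \<noteq> {}"
    then obtain Gp where Gp: "Gp \<subseteq> GR" "finite Gp" "GG = bl ` Gp" by (meson finite_subset_image)
    then have "Gp \<noteq> {}" using GG by auto
    from finite_balls[OF Gp(2) this, of c r z] lip Gp(1)
    obtain y where "\<forall>i\<in>Gp. norm (y - c i) \<le> norm (z - r i)" by blast
    then have "y \<in> \<Inter>GG" unfolding Gp(3) bl_def by (auto simp: dist_norm norm_minus_commute)
    then show "\<Inter>GG \<noteq> {}" by blast
  qed
  then obtain y where y: "\<And>pr. pr \<in> GR \<Longrightarrow> y \<in> bl pr" by blast
  define p where "p = (1/2) *\<^sub>R (z + y)"
  define u where "u = (1/2) *\<^sub>R (z - y)"
  have key: "inner (p - a) (u - b) \<ge> 0" if "b \<in> A a" for a b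
  proof -
    define P where "P = z - (a + b)"
    define Q where "Q = y - (a - b)"
    have "y \<in> bl (a, b)" using y that unfolding GR_def by auto
    then have "norm Q \<le> norm P" unfolding bl_def c_def r_def P_def Q_def
      by (simp add: dist_norm norm_minus_commute)
    then have "(norm Q)^2 \<le> (norm P)^2" by (simp add: power_mono)
    moreover have "p - a = (1/2) *\<^sub>R (P + Q)" "u - b = (1/2) *\<^sub>R (P - Q)"
      unfolding p_def u_def P_def Q_def by (simp_all add: algebra_simps scaleR_add_left[symmetric])
    ultimately show ?thesis using inner_half_sq[of P Q] by simp
  qed
  define A' where "A' = A(p := insert u (A p))"
  have memA': "w \<in> A' x \<longleftrightarrow> w \<in> A x \<or> (x = p \<and> w = u)" for w x
    unfolding A'_def by auto
  have "\<forall>x y w v. w \<in> A' x \<longrightarrow> v \<in> A' y \<longrightarrow> inner (x - y) (w - v) \<ge> 0"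
  proof (intro allI impI)
    fix x1 y1 w v assume h: "w \<in> A' x1" "v \<in> A' y1"
    show "inner (x1 - y1) (w - v) \<ge> 0"
    proof (cases "w \<in> A x1")
      case True
      show ?thesis
      proof (cases "v \<in> A y1")
        case True2: True
        show ?thesis using mono[OF True True2] .
      next
        case False
        then have "y1 = p" "v = u" using h memA' by auto
        then show ?thesis using key[OF True] by (metis inner_minus_left inner_minus_right minus_diff_eq minus_minus)
      qed
    next
      case False
      then have x1: "x1 = p" "w = u" using h memA' by auto
      show ?thesis
      proof (cases "v \<in> A y1")
        case True
        show ?thesis using key[OF True] x1 by simp
      next
        case False
        then have "y1 = p" "v = u" using h memA' by auto
        then show ?thesis using x1 by simp
      qed
    qed
  qed
  moreover have "\<forall>x. A x \<subseteq> A' x" unfolding A'_def by auto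
  ultimately have "A' = A" by (rule maxi)
  then have "u \<in> A p" unfolding A'_def by (metis fun_upd_same insertI1)
  moreover have "z - p = u" unfolding p_def u_def by (simp add: algebra_simps scaleR_add_left[symmetric])
  ultimately show ?thesis by auto
qed



lemma resolvent_exists:
  fixes B :: "'a::{real_inner,complete_space} \<Rightarrow> 'a set" and z :: 'a
  assumes b0: "\<beta> \<ge> 0" and mb: "max_beta_monotone \<beta> B" and g0: "\<gamma> > 0"
  shows "\<exists>p. \<exists>u\<in>B p. z = p + \<gamma> *\<^sub>R u"
proof -
  define \<kappa> where "\<kappa> = \<gamma> / (1 + \<gamma> * \<beta>)"
  have gb: "1 + \<gamma> * \<beta> > 0" using b0 g0 by (simp add: add_pos_nonneg)
  have k0: "\<kappa> > 0" unfolding \<kappa>_def using gb g0 by simp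
  have bm: "inner (x - y) (u - v) \<ge> \<beta> * (norm (x - y))^2" if "u \<in> B x" "v \<in> B y" for x y u v
    using mb that unfolding max_beta_monotone_def beta_monotone_def by blast
  define A where "A x = (\<lambda>u. \<kappa> *\<^sub>R (u - \<beta> *\<^sub>R x)) ` B x" for x
  have Amono: "inner (x - y) (a - b) \<ge> 0" if ab0: "a \<in> A x" "b \<in> A y" for x y a b
  proof -
    obtain u v where uv: "u \<in> B x" "v \<in> B y" "a = \<kappa> *\<^sub>R (u - \<beta> *\<^sub>R x)" "b = \<kappa> *\<^sub>R (v - \<beta> *\<^sub>R y)"
      using ab0 unfolding A_def by blast
    have "inner (x - y) (a - b) = \<kappa> * (inner (x - y) (u - v) - \<beta> * (norm (x - y))^2)"
      unfolding uv by (simp add: power2_norm_eq_inner inner_diff inner_scaleR_right algebra_simps)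
    also have "\<dots> \<ge> 0" using bm[OF uv(1,2)] k0 by simp
    finally show ?thesis .
  qed
  have Amax: "A' = A" if A'm: "\<forall>x y u v. u \<in> A' x \<longrightarrow> v \<in> A' y \<longrightarrow> inner (x - y) (u - v) \<ge> 0"
    and A'sup: "\<forall>x. A x \<subseteq> A' x" for A'
  proof -
    define B' where "B' x = (\<lambda>a. (1/\<kappa>) *\<^sub>R a + \<beta> *\<^sub>R x) ` A' x" for x
    have "beta_monotone \<beta> B'"
      unfolding beta_monotone_def
    proof (intro allI impI)
      fix x y u v assume "u \<in> B' x" "v \<in> B' y"
      then obtain a b where ab: "a \<in> A' x" "b \<in> A' y" "u = (1/\<kappa>) *\<^sub>R a + \<beta> *\<^sub>R x" "v = (1/\<kappa>) *\<^sub>R b + \<beta> *\<^sub>R y"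
        unfolding B'_def by auto
      have "inner (x - y) (u - v) = (1/\<kappa>) * inner (x - y) (a - b) + \<beta> * (norm (x - y))^2"
        unfolding ab by (simp add: power2_norm_eq_inner inner_diff inner_add_right inner_scaleR_right algebra_simps)
      moreover have "(1/\<kappa>) * inner (x - y) (a - b) \<ge> 0" using A'm ab k0 by simp
      ultimately show "\<beta> * (norm (x - y))^2 \<le> inner (x - y) (u - v)" by simp
    qed
    moreover have "\<forall>x. B x \<subseteq> B' x"
    proof (intro allI subsetI)
      fix x u assume u: "u \<in> B x"
      then have "\<kappa> *\<^sub>R (u - \<beta> *\<^sub>R x) \<in> A' x" using A'sup unfolding A_def by blast
      moreover have "u = (1/\<kappa>) *\<^sub>R (\<kappa> *\<^sub>R (u - \<beta> *\<^sub>R x)) + \<beta> *\<^sub>R x" using k0 by simp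
      ultimately show "u \<in> B' x" unfolding B'_def by blast
    qed
    ultimately have BB: "B' = B" using mb unfolding max_beta_monotone_def by blast
    have "A' x \<subseteq> A x" for x
    proof
      fix a assume a: "a \<in> A' x"
      then have "(1/\<kappa>) *\<^sub>R a + \<beta> *\<^sub>R x \<in> B x" unfolding BB[symmetric] B'_def by blast
      moreover have "a = \<kappa> *\<^sub>R (((1/\<kappa>) *\<^sub>R a + \<beta> *\<^sub>R x) - \<beta> *\<^sub>R x)" using k0 by simp
      ultimately show "a \<in> A x" unfolding A_def by blast
    qed
    then show ?thesis using A'sup by (intro ext) (simp add: subset_antisym)
  qed
  obtain p where p: "(1/(1 + \<gamma> * \<beta>)) *\<^sub>R z - p \<in> A p"
    using minty[of A, OF Amono Amax] by blast
  then obtain u where u: "u \<in> B p" "(1/(1 + \<gamma> * \<beta>)) *\<^sub>R z - p = \<kappa> *\<^sub>R (u - \<beta> *\<^sub>R p)"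
    unfolding A_def by auto
  have e: "(1/(1 + \<gamma> * \<beta>)) *\<^sub>R z = p + \<kappa> *\<^sub>R (u - \<beta> *\<^sub>R p)"
    using u(2) by (metis add.commute diff_add_cancel)
  have z1: "z = (1 + \<gamma> * \<beta>) *\<^sub>R ((1/(1 + \<gamma> * \<beta>)) *\<^sub>R z)" using gb by simp
  have kk: "(1 + \<gamma> * \<beta>) * \<kappa> = \<gamma>" unfolding \<kappa>_def using gb by simp
  have "(1 + \<gamma> * \<beta>) *\<^sub>R (p + \<kappa> *\<^sub>R (u - \<beta> *\<^sub>R p)) = (1 + \<gamma> * \<beta>) *\<^sub>R p + \<gamma> *\<^sub>R (u - \<beta> *\<^sub>R p)"
    by (simp only: scaleR_add_right scaleR_scaleR kk)
  also have "\<dots> = p + \<gamma> *\<^sub>R u" by (simp add: algebra_simps)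
  finally have "z = p + \<gamma> *\<^sub>R u" using z1 unfolding e by simp
  then show ?thesis using u(1) by blast
qed

lemma resolvent_unique:
  fixes B :: "'a::real_inner \<Rightarrow> 'a set"
  assumes b0: "\<beta> \<ge> 0" and mb: "max_beta_monotone \<beta> B" and g0: "\<gamma> > 0"
    and "u \<in> B p" "z = p + \<gamma> *\<^sub>R u" "v \<in> B q" "z = q + \<gamma> *\<^sub>R v"
  shows "p = q"
proof -
  have "inner (p - q) (u - v) \<ge> \<beta> * (norm (p - q))^2"
    using mb assms(4,6) unfolding max_beta_monotone_def beta_monotone_def by blast
  then have i0: "inner (p - q) (u - v) \<ge> 0" using b0 by (smt (verit) zero_le_mult_iff zero_le_power2)
  have "\<gamma> *\<^sub>R (u - v) = q - p" using assms(5,7) by (simp add: algebra_simps)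
  then have "\<gamma> * inner (p - q) (u - v) = -((norm (p - q))^2)"
    by (metis inner_scaleR_right inner_minus_right minus_diff_eq power2_norm_eq_inner)
  then have "(norm (p - q))^2 \<le> 0" using i0 g0 by (smt (verit) mult_nonneg_nonneg)
  then show ?thesis by simp
qed

lemma resolvent_char:
  fixes B :: "'a::{real_inner,complete_space} \<Rightarrow> 'a set"
  assumes b0: "\<beta> \<ge> 0" and mb: "max_beta_monotone \<beta> B" and g0: "\<gamma> > 0"
  shows "\<exists>u\<in>B (resolvent (op_scale \<gamma> B) z). z = resolvent (op_scale \<gamma> B) z + \<gamma> *\<^sub>R u"
    and "u \<in> B p \<Longrightarrow> z = p + \<gamma> *\<^sub>R u \<Longrightarrow> resolvent (op_scale \<gamma> B) z = p"
proof -
  have eq: "z \<in> (\<lambda>w. p + w) ` op_scale \<gamma> B p \<longleftrightarrow> (\<exists>u\<in>B p. z = p + \<gamma> *\<^sub>R u)" for p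
    unfolding op_scale_def by auto
  have ex1: "\<exists>!p. z \<in> (\<lambda>w. p + w) ` op_scale \<gamma> B p"
    unfolding eq using resolvent_exists[OF b0 mb g0, of z] resolvent_unique[OF b0 mb g0] by blast
  show "\<exists>u\<in>B (resolvent (op_scale \<gamma> B) z). z = resolvent (op_scale \<gamma> B) z + \<gamma> *\<^sub>R u"
    using theI'[OF ex1] unfolding resolvent_def eq .
  show "resolvent (op_scale \<gamma> B) z = p" if "u \<in> B p" "z = p + \<gamma> *\<^sub>R u"
    unfolding resolvent_def using that by (intro the1_equality[OF ex1]) (auto simp: op_scale_def)
qed



lemma key_ineq:
  fixes d e c :: "'a::real_inner" and \<sigma> \<eta> \<gamma> \<beta> :: real
  assumes mon: "inner e (d - \<gamma> *\<^sub>R c - e) \<ge> \<gamma> * \<beta> * (norm e)^2"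
    and coc: "inner d c \<ge> \<sigma> * (norm c)^2"
    and s0: "\<sigma> > 0" and e0: "\<eta> > 0" and g0: "\<gamma> > 0"
  shows "(norm (d - \<eta> *\<^sub>R (d - e)))^2 \<le> (norm d)^2
     - ((4*\<sigma> - \<gamma>) / (2*\<eta>*\<sigma>) - 1) * (norm (\<eta> *\<^sub>R (d - e)))^2
     - \<gamma> / (2*\<eta>*\<sigma>) * (norm (\<eta> *\<^sub>R (d - e) - (2*\<eta>*\<sigma>) *\<^sub>R c))^2
     - 2*\<eta>*\<gamma>*\<beta>*(norm e)^2"
proof -
  define w where "w = d - e"
  have ew: "e = d - w" unfolding w_def by simp
  define nd where "nd = (norm d)^2"
  define nw where "nw = (norm w)^2"
  define nc where "nc = (norm c)^2"
  define ne where "ne = (norm e)^2"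
  define dw where "dw = inner d w"
  define wc where "wc = inner w c"
  define dc where "dc = inner d c"
  have mon': "dw - \<gamma> * dc - nw + \<gamma> * wc \<ge> \<gamma> * \<beta> * ne"
  proof -
    have "inner e (d - \<gamma> *\<^sub>R c - e) = inner (d - w) (w - \<gamma> *\<^sub>R c)" unfolding ew by (simp add: algebra_simps)
    also have "\<dots> = dw - \<gamma> * dc - nw + \<gamma> * wc"
      unfolding dw_def dc_def nw_def wc_def by (simp add: inner_diff power2_norm_eq_inner inner_commute algebra_simps)
    finally show ?thesis using mon unfolding ne_def by simp
  qed
  have coc': "dc \<ge> \<sigma> * nc" using coc unfolding dc_def nc_def .
  have L: "(norm (d - \<eta> *\<^sub>R (d - e)))^2 = nd - 2*\<eta>*dw + \<eta>^2 * nw"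
    unfolding w_def[symmetric] nsq_diff nsq_scale nd_def dw_def nw_def by simp
  have r1: "(norm (\<eta> *\<^sub>R (d - e)))^2 = \<eta>^2 * nw" unfolding w_def[symmetric] nsq_scale nw_def ..
  have r2: "(norm (\<eta> *\<^sub>R (d - e) - (2*\<eta>*\<sigma>) *\<^sub>R c))^2 = \<eta>^2*nw - 4*\<eta>^2*\<sigma>*wc + 4*\<eta>^2*\<sigma>^2*nc"
    unfolding w_def[symmetric] nsq_diff nsq_scale nw_def wc_def nc_def
    by (simp add: power2_eq_square algebra_simps)
  have R: "nd - ((4*\<sigma> - \<gamma>) / (2*\<eta>*\<sigma>) - 1) * (\<eta>^2 * nw)
     - \<gamma> / (2*\<eta>*\<sigma>) * (\<eta>^2*nw - 4*\<eta>^2*\<sigma>*wc + 4*\<eta>^2*\<sigma>^2*nc) - 2*\<eta>*\<gamma>*\<beta>*ne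
     = nd - 2*\<eta>*nw + \<eta>^2*nw + 2*\<gamma>*\<eta>*wc - 2*\<gamma>*\<eta>*\<sigma>*nc - 2*\<eta>*\<gamma>*\<beta>*ne"
    using s0 e0 by (simp add: field_simps power2_eq_square)
  have "nd - 2*\<eta>*dw + \<eta>^2 * nw \<le> nd - 2*\<eta>*nw + \<eta>^2*nw + 2*\<gamma>*\<eta>*wc - 2*\<gamma>*\<eta>*\<sigma>*nc - 2*\<eta>*\<gamma>*\<beta>*ne"
  proof -
    have "\<gamma> * dc \<ge> \<gamma> * (\<sigma> * nc)" using coc' g0 by (simp add: mult_left_mono)
    then have "dw - nw + \<gamma> * wc - \<gamma> * \<sigma> * nc - \<gamma> * \<beta> * ne \<ge> 0" using mon' by (simp add: algebra_simps)
    then have "2*\<eta>*(dw - nw + \<gamma> * wc - \<gamma> * \<sigma> * nc - \<gamma> * \<beta> * ne) \<ge> 0" using e0 by simp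
    then show ?thesis by (simp add: algebra_simps)
  qed
  then show ?thesis unfolding L r1 r2 nd_def[symmetric] ne_def[symmetric] R .
qed



lemma smallo_sqrt:
  fixes s :: "nat \<Rightarrow> real"
  assumes s0: "\<And>n. 0 \<le> s n" and dec: "\<And>n. s (Suc n) \<le> s n" and sm: "summable (\<lambda>n. (s n)^2)"
  shows "s \<in> o(\<lambda>n. 1 / sqrt (real n))"
proof (rule landau_o.smallI)
  fix c :: real assume c: "c > 0"
  have decs: "s n \<le> s k" if "k \<le> n" for k n
    using decseq_SucI[of s, OF dec] that by (simp add: antimono_def)
  have "c^2/2 > 0" using c by simp
  then obtain N where N: "\<And>m n. m \<ge> N \<Longrightarrow> norm (sum (\<lambda>k. (s k)^2) {m..<n}) < c^2/2"
    using sm unfolding summable_Cauchy by blast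
  have "s n \<le> c * norm (1 / sqrt (real n))" if n: "n \<ge> 2*N + 2" for n
  proof -
    define m where "m = n div 2"
    have mN: "m \<ge> N" unfolding m_def using n by simp
    have mn: "m \<le> n" unfolding m_def by simp
    have npos: "real n > 0" using n by simp
    have "real (n - m) * (s n)^2 = (\<Sum>k\<in>{m..<n}. (s n)^2)" by simp
    also have "\<dots> \<le> (\<Sum>k\<in>{m..<n}. (s k)^2)"
      by (intro sum_mono power_mono) (use decs s0 in auto)
    also have "\<dots> < c^2/2" using N[OF mN, of n] by (simp add: sum_nonneg)
    finally have a: "real (n - m) * (s n)^2 < c^2/2" .
    have "real n / 2 \<le> real (n - m)" unfolding m_def by (simp add: of_nat_diff)
    then have "real n / 2 * (s n)^2 \<le> real (n - m) * (s n)^2" by (intro mult_right_mono) simp_all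
    with a have "real n * (s n)^2 < c^2" by simp
    then have "(s n * sqrt (real n))^2 < c^2" using npos by (simp add: power_mult_distrib mult.commute)
    then have "s n * sqrt (real n) < c" using c by (simp add: power_less_imp_less_base)
    then show ?thesis using npos by (simp add: field_simps)
  qed
  then show "\<forall>\<^sub>F n in sequentially. norm (s n) \<le> c * norm (1 / sqrt (real n))"
    unfolding eventually_sequentially using s0 by (metis real_norm_def abs_of_nonneg)
qed



lemma closure_hull_sub:
  fixes S H :: "'a::real_normed_vector set"
  assumes "S \<subseteq> H" "closed H" "convex H"
  shows "closure (convex hull S) \<subseteq> H"
  by (rule closure_minimal[OF hull_minimal[of S H convex, OF assms(1,3)] assms(2)])

lemma eps_eq:
  fixes a b :: real
  assumes "\<And>e. e > 0 \<Longrightarrow> \<bar>a - b\<bar> \<le> e"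
  shows "a = b"
proof (rule ccontr)
  assume "a \<noteq> b"
  then have "\<bar>a - b\<bar> > 0" by simp
  from assms[OF half_gt_zero[OF this]] this show False by simp
qed

lemma weak_conv_fejer:
  fixes T :: "'a::{real_inner,complete_space} \<Rightarrow> 'a" and x :: "nat \<Rightarrow> 'a"
  assumes ne: "\<And>u v. norm (T u - T v) \<le> norm (u - v)"
    and it: "\<And>n. x (Suc n) = T (x n)"
    and p0: "T p0 = p0"
    and res: "(\<lambda>n. x n - T (x n)) \<longlonglongrightarrow> 0"
  shows "\<exists>q. T q = q \<and> weakly_converges x q"
proof -
  have fej: "norm (x (Suc n) - p) \<le> norm (x n - p)" if "T p = p" for p n
    using ne[of "x n" p] that by (simp add: it)
  have fejN: "norm (x n - p) \<le> norm (x m - p)" if "T p = p" "m \<le> n" for p m n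
    using that(2)
  proof (induction rule: dec_induct)
    case (step k) then show ?case using fej[OF that(1), of k] by linarith
  qed simp
  define M where "M = norm (x 0 - p0) + norm p0"
  have xM: "norm (x n) \<le> M" for n
  proof -
    have "norm (x n) \<le> norm (x n - p0) + norm p0" by (metis diff_add_cancel norm_triangle_ineq)
    then show ?thesis using fejN[OF p0, of 0 n] unfolding M_def by simp
  qed
  have lims: "\<exists>L. (\<lambda>n. (norm (x n - p))^2) \<longlonglongrightarrow> L" if "T p = p" for p
  proof -
    have "antimono_on UNIV (\<lambda>n. norm (x n - p))" using fej[OF that] by (intro decseq_SucI)
    then obtain L where "(\<lambda>n. norm (x n - p)) \<longlonglongrightarrow> L"
      by (rule decseq_convergent[of _ 0]) auto
    then have "(\<lambda>n. (norm (x n - p))^2) \<longlonglongrightarrow> L^2" by (rule tendsto_power)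
    then show ?thesis by blast
  qed
  define K where "K P N = closure (convex hull {x n | n. n \<ge> N \<and> P n})" for P :: "nat \<Rightarrow> bool" and N
  have Kcl: "closed (K P N)" "convex (K P N)" for P N
    unfolding K_def by (auto simp: convex_closure convex_convex_hull)
  have Kbd: "K P N \<subseteq> cball 0 M" for P N
    unfolding K_def by (rule closure_hull_sub) (use xM in auto)
  have Ksub: "closed H \<Longrightarrow> convex H \<Longrightarrow> {x n | n. n \<ge> N \<and> P n} \<subseteq> H \<Longrightarrow> K P N \<subseteq> H"
    for H P N unfolding K_def by (rule closure_hull_sub)
  have Kmem: "x n \<in> K P N" if "n \<ge> N" "P n" for P N n
    unfolding K_def using that by (intro subsetD[OF closure_subset] hull_inc) auto
  have Kne: "\<Inter>(range (K P)) \<noteq> {}" if fr: "frequently P sequentially" for P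
  proof (rule nested_closed_convex)
    show "closed (K P n)" "convex (K P n)" for n using Kcl by auto
    show "K P n \<noteq> {}" for n
    proof -
      obtain m where "m \<ge> n" "P m" using fr unfolding frequently_sequentially by blast
      then show ?thesis using Kmem by blast
    qed
    show "bounded (K P 0)" using Kbd bounded_cball bounded_subset by blast
    show "K P (Suc n) \<subseteq> K P n" for n
      unfolding K_def by (intro closure_mono hull_mono) auto
  qed
  have KP_sub: "K P N \<subseteq> K (\<lambda>_. True) N" for P N
    unfolding K_def by (intro closure_mono hull_mono) auto
  define Q where "Q = \<Inter>(range (K (\<lambda>_. True)))"
  have inQ: "q \<in> K (\<lambda>_. True) N" if "q \<in> Q" for q N using that unfolding Q_def by auto
  have inF: "T q = q" if q: "q \<in> Q" for q
  proof (rule ccontr)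
    assume nfix: "T q \<noteq> q"
    define v where "v = q - T q"
    have v0: "(norm v)^2 > 0" using nfix unfolding v_def by simp
    define R where "R = M + norm q"
    define \<epsilon> where "\<epsilon> n = norm (x n - T (x n))" for n
    have key: "(norm v)^2 + 2 * inner (x n - q) v \<le> \<epsilon> n * (2 * R + \<epsilon> n)" for n
    proof -
      define \<rho> where "\<rho> = norm (x n - q)"
      have \<rho>R: "\<rho> \<le> R" unfolding \<rho>_def R_def using xM[of n] norm_triangle_ineq4[of "x n" q] by simp
      have e0: "\<epsilon> n \<ge> 0" unfolding \<epsilon>_def by simp
      have "norm (x n - T q) \<le> norm (x n - T (x n)) + norm (T (x n) - T q)"
        by (metis diff_add_cancel norm_triangle_ineq add_diff_eq)
      also have "\<dots> \<le> \<epsilon> n + \<rho>" unfolding \<epsilon>_def \<rho>_def using ne[of "x n" q] by simp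
      finally have "(norm (x n - T q))^2 \<le> (\<epsilon> n + \<rho>)^2" by (simp add: power_mono)
      moreover have "x n - T q = (x n - q) + v" unfolding v_def by simp
      ultimately have "\<rho>^2 + 2 * inner (x n - q) v + (norm v)^2 \<le> (\<epsilon> n + \<rho>)^2"
        unfolding \<rho>_def by (simp add: nsq_add)
      then have "(norm v)^2 + 2 * inner (x n - q) v \<le> \<epsilon> n * (2 * \<rho> + \<epsilon> n)"
        by (simp add: power2_eq_square algebra_simps)
      also have "\<dots> \<le> \<epsilon> n * (2 * R + \<epsilon> n)" using \<rho>R e0 by (intro mult_left_mono) auto
      finally show ?thesis .
    qed
    have "(\<lambda>n. \<epsilon> n) \<longlonglongrightarrow> 0" unfolding \<epsilon>_def using tendsto_norm[OF res] by simp
    then have "(\<lambda>n. \<epsilon> n * (2 * R + \<epsilon> n)) \<longlonglongrightarrow> 0 * (2 * R + 0)"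
      by (intro tendsto_intros)
    then have "\<forall>\<^sub>F n in sequentially. \<epsilon> n * (2 * R + \<epsilon> n) < (norm v)^2 / 2"
      using v0 by (intro order_tendstoD(2)) auto
    then obtain N where N: "\<And>n. n \<ge> N \<Longrightarrow> \<epsilon> n * (2 * R + \<epsilon> n) < (norm v)^2 / 2"
      unfolding eventually_sequentially by blast
    define H where "H = {y. inner v y \<le> inner v q - (norm v)^2 / 4}"
    have "{x n | n. n \<ge> N \<and> True} \<subseteq> H"
    proof safe
      fix n assume "n \<ge> N"
      with key[of n] N[of n] have "inner (x n - q) v < -((norm v)^2 / 4)" by simp
      then have "inner v (x n) - inner v q < -((norm v)^2 / 4)" by (simp only: inner_commute[of "x n - q" v] inner_diff_right)
      then show "x n \<in> H" unfolding H_def by simp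
    qed
    moreover have "closed H" "convex H" unfolding H_def by (rule closed_halfspace_le convex_halfspace_le)+
    ultimately have "K (\<lambda>_. True) N \<subseteq> H" using Ksub by blast
    then have "q \<in> H" using inQ[OF q] by blast
    then show False using v0 unfolding H_def by simp
  qed
  have slab: "inner z v = l" if z: "z \<in> Q" and lim: "(\<lambda>n. inner (x n) v) \<longlonglongrightarrow> l" for z v l
  proof (rule eps_eq)
    fix e :: real assume e: "e > 0"
    have "\<forall>\<^sub>F n in sequentially. dist (inner (x n) v) l < e" using lim e by (rule tendstoD)
    then obtain N where N: "\<And>n. n \<ge> N \<Longrightarrow> \<bar>inner (x n) v - l\<bar> < e"
      unfolding eventually_sequentially dist_real_def by blast
    define H where "H = {y. inner v y \<le> l + e} \<inter> {y. inner (-v) y \<le> e - l}"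
    have "{x n | n. n \<ge> N \<and> True} \<subseteq> H"
      using N unfolding H_def by (force simp: inner_commute)
    moreover have "closed H" "convex H" unfolding H_def
      by (intro closed_Int convex_Int closed_halfspace_le convex_halfspace_le)+
    ultimately have "K (\<lambda>_. True) N \<subseteq> H" using Ksub by blast
    then have "z \<in> H" using inQ[OF z] by blast
    then show "\<bar>inner z v - l\<bar> \<le> e" unfolding H_def by (auto simp: inner_commute)
  qed
  have uniq: "q = q'" if q: "q \<in> Q" and q': "q' \<in> Q" for q q'
  proof -
    obtain L where L: "(\<lambda>n. (norm (x n - q))^2) \<longlonglongrightarrow> L" using lims inF[OF q] by blast
    obtain L' where L': "(\<lambda>n. (norm (x n - q'))^2) \<longlonglongrightarrow> L'" using lims inF[OF q'] by blast
    have eq: "inner (x n) (q' - q) = ((norm (x n - q))^2 - (norm (x n - q'))^2 + (norm q')^2 - (norm q)^2) / 2" for n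
      by (simp add: power2_norm_eq_inner inner_diff algebra_simps inner_commute)
    have lim: "(\<lambda>n. inner (x n) (q' - q)) \<longlonglongrightarrow> (L - L' + (norm q')^2 - (norm q)^2) / 2"
      unfolding eq by (intro tendsto_intros L L') simp
    have "inner q' (q' - q) - inner q (q' - q) = 0" using slab[OF q lim] slab[OF q' lim] by simp
    then have "(norm (q' - q))^2 = 0" by (simp add: power2_norm_eq_inner inner_diff_left)
    then show ?thesis by simp
  qed
  have "Q \<noteq> {}" unfolding Q_def by (rule Kne) simp
  then obtain xs where xs: "xs \<in> Q" by blast
  have nfreq: "\<not> frequently (\<lambda>n. inner (x n - xs) y \<ge> e) sequentially" if e: "e > 0" for y e
  proof
    assume fr: "frequently (\<lambda>n. inner (x n - xs) y \<ge> e) sequentially"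
    define P where "P n = (inner (x n - xs) y \<ge> e)" for n
    obtain q' where q': "q' \<in> \<Inter>(range (K P))" using Kne[of P] fr unfolding P_def by blast
    have "q' \<in> Q" using q' KP_sub unfolding Q_def by blast
    then have "q' = xs" using uniq xs by blast
    define H where "H = {z. inner (-y) z \<le> - (e + inner xs y)}"
    have ic: "inner (-y) z = - inner z y" for z by (simp add: inner_commute)
    have "{x n | n. n \<ge> 0 \<and> P n} \<subseteq> H"
    proof safe
      fix n assume "P n"
      then have "e \<le> inner (x n) y - inner xs y" unfolding P_def by (simp add: inner_diff_left)
      then show "x n \<in> H" unfolding H_def ic by simp
    qed
    moreover have "closed H" "convex H" unfolding H_def by (rule closed_halfspace_le convex_halfspace_le)+
    ultimately have "K P 0 \<subseteq> H" using Ksub by blast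
    then have "q' \<in> H" using q' by blast
    then show False using \<open>q' = xs\<close> e unfolding H_def ic by simp
  qed
  have "weakly_converges x xs"
    unfolding weakly_converges_def
  proof (intro allI tendstoI)
    fix y and e :: real assume e: "e > 0"
    have "\<forall>\<^sub>F n in sequentially. \<not> inner (x n - xs) y \<ge> e" using nfreq[OF e, of y] by (simp add: not_frequently)
    moreover have "\<forall>\<^sub>F n in sequentially. \<not> inner (x n - xs) (-y) \<ge> e" using nfreq[OF e, of "-y"] by (simp add: not_frequently)
    ultimately show "\<forall>\<^sub>F n in sequentially. dist (inner (x n) y) (inner xs y) < e"
      by eventually_elim (auto simp: dist_real_def inner_diff_left)
  qed
  then show ?thesis using inF[OF xs] by blast
qed



lemma avg_lemma:
  fixes T :: "'a::real_inner \<Rightarrow> 'a"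
  assumes t0: "0 < \<theta>" and t1: "\<theta> < 1"
    and h: "\<And>u v. (norm (T u - T v))^2 \<le> (norm (u - v))^2 - (1/\<theta> - 1) * (norm ((u - T u) - (v - T v)))^2"
  shows "averaged \<theta> T"
proof -
  define N where "N z = (1/\<theta>) *\<^sub>R (T z - (1 - \<theta>) *\<^sub>R z)" for z
  have TN: "T z = (1 - \<theta>) *\<^sub>R z + \<theta> *\<^sub>R N z" for z
    unfolding N_def using t0 by simp
  have "nonexpansive N"
    unfolding nonexpansive_def
  proof (intro allI)
    fix u v :: 'a
    define D where "D = u - v"
    define W where "W = (u - T u) - (v - T v)"
    have TD: "T u - T v = D - W" unfolding D_def W_def by (simp add: algebra_simps)
    have ND: "N u - N v = D - (1/\<theta>) *\<^sub>R W"
    proof -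
      have "N u - N v = (1/\<theta>) *\<^sub>R ((T u - T v) - (1 - \<theta>) *\<^sub>R D)"
        unfolding N_def D_def by (simp add: algebra_simps)
      also have "\<dots> = (1/\<theta>) *\<^sub>R (\<theta> *\<^sub>R D - W)" unfolding TD by (simp add: algebra_simps)
      also have "\<dots> = D - (1/\<theta>) *\<^sub>R W" using t0 by (simp add: scaleR_diff_right)
      finally show ?thesis .
    qed
    have "(norm (D - W))^2 \<le> (norm D)^2 - (1/\<theta> - 1) * (norm W)^2"
      using h[of u v] unfolding TD D_def W_def .
    then have "- 2 * inner D W \<le> - (1/\<theta>) * (norm W)^2"
      unfolding nsq_diff by (simp add: algebra_simps)
    then have "(1/\<theta>) * (- 2 * inner D W) \<le> (1/\<theta>) * (- (1/\<theta>) * (norm W)^2)"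
      using t0 by (intro mult_left_mono) auto
    then have "(norm (D - (1/\<theta>) *\<^sub>R W))^2 \<le> (norm D)^2"
      unfolding nsq_diff nsq_scale by (simp add: power2_eq_square algebra_simps)
    then have "norm (N u - N v) \<le> norm D" unfolding ND by (rule power2_le_imp_le) simp
    then show "norm (N u - N v) \<le> norm (u - v)" unfolding D_def .
  qed
  then show ?thesis unfolding averaged_def using t0 t1 TN by blast
qed



theorem theorem5p1:
  fixes B :: "'a::{real_inner, complete_space} \<Rightarrow> 'a set"
    and C :: "'a \<Rightarrow> 'a" and T :: "'a \<Rightarrow> 'a" and x :: "nat \<Rightarrow> 'a"
    and \<beta> \<sigma> \<gamma> \<eta> :: real and x0 :: 'a
  assumes "\<beta> \<ge> 0" and "max_beta_monotone \<beta> B" and "cocoercive \<sigma> C"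
    and "0 < \<gamma>" and "\<gamma> < 4 * \<sigma>"
    and "0 < \<eta>" and "\<eta> < 2 - \<gamma> / (2 * \<sigma>)"
    and T_def: "\<And>z. T z = (1 - \<eta>) *\<^sub>R z + \<eta> *\<^sub>R resolvent (op_scale \<gamma> B) (z - \<gamma> *\<^sub>R C z)"
    and "x 0 = x0" and "\<And>n. x (Suc n) = T (x n)"
  shows "(\<forall>u v. (norm (T u - T v))^2 \<le> (norm (u - v))^2
            - ((4 * \<sigma> - \<gamma>) / (2 * \<eta> * \<sigma>) - 1) * (norm ((u - T u) - (v - T v)))^2
            - \<gamma> / (2 * \<eta> * \<sigma>) * (norm ((u - T u) - (v - T v) - (2 * \<eta> * \<sigma>) *\<^sub>R (C u - C v)))^2)
       \<and> averaged (2 * \<eta> * \<sigma> / (4 * \<sigma> - \<gamma>)) T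
       \<and> (zer (op_sum B C) \<noteq> {} \<longrightarrow>
            (\<lambda>n. norm (x n - T (x n))) \<in> o(\<lambda>n. 1 / sqrt (real n))
          \<and> (\<exists>xs \<in> zer (op_sum B C).
               weakly_converges x xs
             \<and> (\<lambda>n. C (x n)) \<longlonglongrightarrow> C xs
             \<and> C ` zer (op_sum B C) = {C xs}
             \<and> (\<beta> > 0 \<longrightarrow> x \<longlonglongrightarrow> xs \<and> zer (op_sum B C) = {xs})))"
proof -
  note b0 = assms(1) and mb = assms(2) and coc = assms(3) and g0 = assms(4) and g4 = assms(5)
    and e0 = assms(6) and e2 = assms(7) and it = assms(10)
  have s0: "\<sigma> > 0" using g0 g4 by simp
  define J where "J z = resolvent (op_scale \<gamma> B) z" for z
  have Jc: "\<exists>u\<in>B (J z). z = J z + \<gamma> *\<^sub>R u" for z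
    unfolding J_def by (rule resolvent_char(1)[OF b0 mb g0])
  have Jeq: "J z = p" if "u \<in> B p" "z = p + \<gamma> *\<^sub>R u" for z p u
    unfolding J_def by (rule resolvent_char(2)[OF b0 mb g0 that])
  have Tf: "T z = z - \<eta> *\<^sub>R (z - J (z - \<gamma> *\<^sub>R C z))" for z
    unfolding T_def J_def by (simp add: algebra_simps)
  define k1 where "k1 = (4 * \<sigma> - \<gamma>) / (2 * \<eta> * \<sigma>) - 1"
  define c2 where "c2 = \<gamma> / (2 * \<eta> * \<sigma>)"
  have k1p: "k1 > 0"
  proof -
    have "2 * \<eta> * \<sigma> < 4 * \<sigma> - \<gamma>"
    proof -
      have "\<eta> * (2 * \<sigma>) < (2 - \<gamma> / (2 * \<sigma>)) * (2 * \<sigma>)" using e2 s0 by (intro mult_strict_right_mono) auto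
      also have "\<dots> = 4 * \<sigma> - \<gamma>" using s0 by (simp add: field_simps)
      finally show ?thesis by (simp add: mult_ac)
    qed
    then have "(4 * \<sigma> - \<gamma>) / (2 * \<eta> * \<sigma>) > 1" using e0 s0 by (simp add: field_simps)
    then show ?thesis unfolding k1_def by simp
  qed
  have c2p: "c2 > 0" unfolding c2_def using g0 e0 s0 by simp
  have strong: "(norm (T u - T v))^2 \<le> (norm (u - v))^2
            - k1 * (norm ((u - T u) - (v - T v)))^2
            - c2 * (norm ((u - T u) - (v - T v) - (2 * \<eta> * \<sigma>) *\<^sub>R (C u - C v)))^2
            - 2*\<eta>*\<gamma>*\<beta>*(norm (J (u - \<gamma> *\<^sub>R C u) - J (v - \<gamma> *\<^sub>R C v)))^2" for u v
  proof -
    define p where "p = J (u - \<gamma> *\<^sub>R C u)"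
    define q where "q = J (v - \<gamma> *\<^sub>R C v)"
    obtain a where a: "a \<in> B p" "u - \<gamma> *\<^sub>R C u = p + \<gamma> *\<^sub>R a" using Jc unfolding p_def by blast
    obtain b where b: "b \<in> B q" "v - \<gamma> *\<^sub>R C v = q + \<gamma> *\<^sub>R b" using Jc unfolding q_def by blast
    define d where "d = u - v"
    define e where "e = p - q"
    define c where "c = C u - C v"
    have "d - \<gamma> *\<^sub>R c - e = (u - \<gamma> *\<^sub>R C u - p) - (v - \<gamma> *\<^sub>R C v - q)"
      unfolding d_def c_def e_def by (simp add: algebra_simps)
    also have "\<dots> = \<gamma> *\<^sub>R a - \<gamma> *\<^sub>R b" using a(2) b(2) by simp
    also have "\<dots> = \<gamma> *\<^sub>R (a - b)" by (simp add: scaleR_diff_right)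
    finally have dce: "d - \<gamma> *\<^sub>R c - e = \<gamma> *\<^sub>R (a - b)" .
    have "inner (p - q) (a - b) \<ge> \<beta> * (norm (p - q))^2"
      using mb a(1) b(1) unfolding max_beta_monotone_def beta_monotone_def by blast
    then have i1: "inner e (a - b) \<ge> \<beta> * (norm e)^2" unfolding e_def .
    have "inner e (d - \<gamma> *\<^sub>R c - e) = \<gamma> * inner e (a - b)" by (simp only: dce inner_scaleR_right)
    then have mon: "inner e (d - \<gamma> *\<^sub>R c - e) \<ge> \<gamma> * \<beta> * (norm e)^2"
      using mult_left_mono[OF i1, of \<gamma>] g0 by (simp add: mult.assoc)
    have cc: "inner d c \<ge> \<sigma> * (norm c)^2" using coc unfolding cocoercive_def d_def c_def by blast
    have k: "(norm (d - \<eta> *\<^sub>R (d - e)))^2 \<le> (norm d)^2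
     - ((4*\<sigma> - \<gamma>) / (2*\<eta>*\<sigma>) - 1) * (norm (\<eta> *\<^sub>R (d - e)))^2
     - \<gamma> / (2*\<eta>*\<sigma>) * (norm (\<eta> *\<^sub>R (d - e) - (2*\<eta>*\<sigma>) *\<^sub>R c))^2
     - 2*\<eta>*\<gamma>*\<beta>*(norm e)^2"
      by (rule key_ineq[OF mon cc s0 e0 g0])
    have t1: "T u - T v = d - \<eta> *\<^sub>R (d - e)" unfolding Tf d_def e_def p_def q_def by (simp add: algebra_simps)
    have t2: "(u - T u) - (v - T v) = \<eta> *\<^sub>R (d - e)" unfolding Tf d_def e_def p_def q_def by (simp add: algebra_simps)
    show ?thesis using k unfolding t1 t2 k1_def c2_def c_def d_def e_def p_def q_def .
  qed
  have nn1: "0 \<le> c2 * X" "0 \<le> 2*\<eta>*\<gamma>*\<beta>*Y" "0 \<le> k1 * X" if "X \<ge> 0" "Y \<ge> 0" for X Y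
    using that c2p k1p e0 g0 b0 by auto
  have partI: "(norm (T u - T v))^2 \<le> (norm (u - v))^2
            - ((4 * \<sigma> - \<gamma>) / (2 * \<eta> * \<sigma>) - 1) * (norm ((u - T u) - (v - T v)))^2
            - \<gamma> / (2 * \<eta> * \<sigma>) * (norm ((u - T u) - (v - T v) - (2 * \<eta> * \<sigma>) *\<^sub>R (C u - C v)))^2" for u v
  proof -
    have "0 \<le> 2*\<eta>*\<gamma>*\<beta>*(norm (J (u - \<gamma> *\<^sub>R C u) - J (v - \<gamma> *\<^sub>R C v)))^2"
      using e0 g0 b0 by simp
    then show ?thesis using strong[of u v] unfolding k1_def c2_def by linarith
  qed
  have nexp: "norm (T u - T v) \<le> norm (u - v)" for u v
  proof -
    have a1: "0 \<le> 2*\<eta>*\<gamma>*\<beta>*(norm (J (u - \<gamma> *\<^sub>R C u) - J (v - \<gamma> *\<^sub>R C v)))^2"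
      using e0 g0 b0 by simp
    have a2: "0 \<le> c2 * (norm ((u - T u) - (v - T v) - (2 * \<eta> * \<sigma>) *\<^sub>R (C u - C v)))^2"
      using c2p by simp
    have a3: "0 \<le> k1 * (norm ((u - T u) - (v - T v)))^2" using k1p by simp
    have "(norm (T u - T v))^2 \<le> (norm (u - v))^2" using strong[of u v] a1 a2 a3 by linarith
    then show ?thesis by (rule power2_le_imp_le) simp
  qed
  define \<theta> where "\<theta> = 2 * \<eta> * \<sigma> / (4 * \<sigma> - \<gamma>)"
  have th: "0 < \<theta>" "\<theta> < 1" "1/\<theta> - 1 = k1"
  proof -
    have "(4 * \<sigma> - \<gamma>) / (2 * \<eta> * \<sigma>) > 1" using k1p unfolding k1_def by simp
    moreover have pos: "4 * \<sigma> - \<gamma> > 0" "2 * \<eta> * \<sigma> > 0" using g4 e0 s0 by auto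
    ultimately have "2 * \<eta> * \<sigma> < 4 * \<sigma> - \<gamma>" by (simp add: field_simps)
    then show "0 < \<theta>" "\<theta> < 1" unfolding \<theta>_def using pos by (auto simp: field_simps)
    show "1/\<theta> - 1 = k1" unfolding \<theta>_def k1_def by simp
  qed
  have avg: "averaged (2 * \<eta> * \<sigma> / (4 * \<sigma> - \<gamma>)) T"
    unfolding \<theta>_def[symmetric]
  proof (rule avg_lemma[OF th(1,2)])
    fix u v
    have "0 \<le> \<gamma> / (2 * \<eta> * \<sigma>) * (norm ((u - T u) - (v - T v) - (2 * \<eta> * \<sigma>) *\<^sub>R (C u - C v)))^2"
      using g0 e0 s0 by simp
    then show "(norm (T u - T v))^2 \<le> (norm (u - v))^2 - (1/\<theta> - 1) * (norm ((u - T u) - (v - T v)))^2"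
      using partI[of u v] unfolding th(3) k1_def by linarith
  qed
  have fixJ: "J (p - \<gamma> *\<^sub>R C p) = p" if "T p = p" for p
  proof -
    have "p - \<eta> *\<^sub>R (p - J (p - \<gamma> *\<^sub>R C p)) = p - 0" using that Tf[of p] by simp
    then have "\<eta> *\<^sub>R (p - J (p - \<gamma> *\<^sub>R C p)) = 0" by simp
    then show ?thesis using e0 by simp
  qed
  have zer_fix: "p \<in> zer (op_sum B C) \<longleftrightarrow> T p = p" for p
  proof
    assume "p \<in> zer (op_sum B C)"
    then have "- C p \<in> B p" unfolding zer_def op_sum_def by (auto simp: add_eq_0_iff)
    then have "J (p - \<gamma> *\<^sub>R C p) = p" by (intro Jeq[of "- C p"]) auto
    then show "T p = p" using Tf[of p] by simp
  next
    assume "T p = p"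
    then have j: "J (p - \<gamma> *\<^sub>R C p) = p" by (rule fixJ)
    obtain u where u: "u \<in> B (J (p - \<gamma> *\<^sub>R C p))" "p - \<gamma> *\<^sub>R C p = J (p - \<gamma> *\<^sub>R C p) + \<gamma> *\<^sub>R u"
      using Jc by blast
    then have "\<gamma> *\<^sub>R u + \<gamma> *\<^sub>R C p = 0" using j by (simp add: algebra_simps)
    then have "\<gamma> *\<^sub>R u = \<gamma> *\<^sub>R (- C p)" by (simp add: add_eq_0_iff)
    then have "u = - C p" using g0 by (metis less_irrefl scaleR_cancel_left scaleR_minus_right)
    then have "- C p \<in> B p" using u(1) j by simp
    then show "p \<in> zer (op_sum B C)" unfolding zer_def op_sum_def by force
  qed
  have partII: "zer (op_sum B C) \<noteq> {} \<longrightarrow>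
            (\<lambda>n. norm (x n - T (x n))) \<in> o(\<lambda>n. 1 / sqrt (real n))
          \<and> (\<exists>xs \<in> zer (op_sum B C).
               weakly_converges x xs
             \<and> (\<lambda>n. C (x n)) \<longlonglongrightarrow> C xs
             \<and> C ` zer (op_sum B C) = {C xs}
             \<and> (\<beta> > 0 \<longrightarrow> x \<longlonglongrightarrow> xs \<and> zer (op_sum B C) = {xs}))"
  proof
    assume "zer (op_sum B C) \<noteq> {}"
    then obtain xz where xz: "T xz = xz" using zer_fix by blast
    have sums: "summable (\<lambda>n. (norm (x n - T (x n)))^2)
       \<and> summable (\<lambda>n. (norm ((x n - T (x n)) - (2 * \<eta> * \<sigma>) *\<^sub>R (C (x n) - C p)))^2)
       \<and> summable (\<lambda>n. \<beta> * (norm (J (x n - \<gamma> *\<^sub>R C (x n)) - p))^2)" if p: "T p = p" for p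
    proof -
      define a where "a n = (norm (x n - p))^2" for n
      define t1 where "t1 n = (norm (x n - T (x n)))^2" for n
      define t2 where "t2 n = (norm ((x n - T (x n)) - (2 * \<eta> * \<sigma>) *\<^sub>R (C (x n) - C p)))^2" for n
      define t3 where "t3 n = \<beta> * (norm (J (x n - \<gamma> *\<^sub>R C (x n)) - p))^2" for n
      have step: "a (Suc n) \<le> a n - k1 * t1 n - c2 * t2 n - 2*\<eta>*\<gamma> * t3 n" for n
      proof -
        have h: "(norm (T (x n) - T p))^2 \<le> (norm (x n - p))^2
            - k1 * (norm ((x n - T (x n)) - (p - T p)))^2
            - c2 * (norm ((x n - T (x n)) - (p - T p) - (2 * \<eta> * \<sigma>) *\<^sub>R (C (x n) - C p)))^2
            - 2*\<eta>*\<gamma>*\<beta>*(norm (J (x n - \<gamma> *\<^sub>R C (x n)) - J (p - \<gamma> *\<^sub>R C p)))^2"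
          by (rule strong)
        have e3: "2*\<eta>*\<gamma> * t3 n = 2*\<eta>*\<gamma>*\<beta>*(norm (J (x n - \<gamma> *\<^sub>R C (x n)) - p))^2"
          unfolding t3_def by (simp add: mult.assoc)
        show ?thesis using h e3 unfolding a_def t1_def t2_def it[symmetric] p fixJ[OF p] diff_self diff_zero
          by linarith
      qed
      have tpos: "t1 n \<ge> 0" "t2 n \<ge> 0" "t3 n \<ge> 0" for n unfolding t1_def t2_def t3_def using b0 by auto
      have egp: "2*\<eta>*\<gamma> > 0" using e0 g0 by simp
      have pp: "k1 * t1 n \<ge> 0" "c2 * t2 n \<ge> 0" "2*\<eta>*\<gamma> * t3 n \<ge> 0" for n
        using tpos[of n] k1p c2p egp by simp_all
      have dec: "a (Suc n) \<le> a n" for n using step[of n] pp[of n] by linarith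
      obtain L where L: "a \<longlonglongrightarrow> L"
        using decseq_convergent[of a 0] decseq_SucI[of a, OF dec] unfolding a_def by auto
      have tel: "summable (\<lambda>n. a n - a (Suc n))" by (rule telescope_summable'[OF L])
      have sm: "summable (\<lambda>n. (1/c) * (a n - a (Suc n)))" for c by (rule summable_mult[OF tel])
      have cmp: "summable t" if "\<And>n. 0 \<le> t n" "\<And>n. c * t n \<le> a n - a (Suc n)" "c > 0" for t c
      proof (rule summable_comparison_test'[OF sm[of c]])
        fix n show "norm (t n) \<le> (1/c) * (a n - a (Suc n))"
          using that(1)[of n] that(2)[of n] that(3) by (simp add: field_simps)
      qed
      have "summable t1"
      proof (rule cmp[of t1 k1])
        show "k1 * t1 n \<le> a n - a (Suc n)" for n using step[of n] pp[of n] by linarith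
      qed (use tpos k1p in auto)
      moreover have "summable t2"
      proof (rule cmp[of t2 c2])
        show "c2 * t2 n \<le> a n - a (Suc n)" for n using step[of n] pp[of n] by linarith
      qed (use tpos c2p in auto)
      moreover have "summable t3"
      proof (rule cmp[of t3 "2*\<eta>*\<gamma>"])
        show "2*\<eta>*\<gamma> * t3 n \<le> a n - a (Suc n)" for n using step[of n] pp[of n] by linarith
      qed (use tpos egp in auto)
      ultimately show ?thesis unfolding t1_def t2_def t3_def by blast
    qed
    have sum1: "summable (\<lambda>n. (norm (x n - T (x n)))^2)" using sums[OF xz] by blast
    have dres: "norm (x (Suc n) - T (x (Suc n))) \<le> norm (x n - T (x n))" for n
      using nexp[of "x n" "x (Suc n)"] unfolding it by (simp add: norm_minus_commute)
    have o: "(\<lambda>n. norm (x n - T (x n))) \<in> o(\<lambda>n. 1 / sqrt (real n))"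
      by (rule smallo_sqrt) (use dres sum1 in auto)
    have res: "(\<lambda>n. x n - T (x n)) \<longlonglongrightarrow> 0"
    proof -
      have "(\<lambda>n. (norm (x n - T (x n)))^2) \<longlonglongrightarrow> 0" by (rule summable_LIMSEQ_zero[OF sum1])
      then have "(\<lambda>n. sqrt ((norm (x n - T (x n)))^2)) \<longlonglongrightarrow> sqrt 0" by (rule tendsto_real_sqrt)
      then have "(\<lambda>n. norm (x n - T (x n))) \<longlonglongrightarrow> 0" by simp
      then show ?thesis by (rule tendsto_norm_zero_cancel)
    qed
    obtain xs where xs: "T xs = xs" "weakly_converges x xs"
      using weak_conv_fejer[OF nexp it xz res] by blast
    have xsz: "xs \<in> zer (op_sum B C)" using zer_fix xs(1) by blast
    have Cconv: "(\<lambda>n. C (x n)) \<longlonglongrightarrow> C xs"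
    proof -
      have "(\<lambda>n. (norm ((x n - T (x n)) - (2 * \<eta> * \<sigma>) *\<^sub>R (C (x n) - C xs)))^2) \<longlonglongrightarrow> 0"
        using sums[OF xs(1)] by (blast intro: summable_LIMSEQ_zero)
      then have "(\<lambda>n. sqrt ((norm ((x n - T (x n)) - (2 * \<eta> * \<sigma>) *\<^sub>R (C (x n) - C xs)))^2)) \<longlonglongrightarrow> sqrt 0"
        by (rule tendsto_real_sqrt)
      then have "(\<lambda>n. norm ((x n - T (x n)) - (2 * \<eta> * \<sigma>) *\<^sub>R (C (x n) - C xs))) \<longlonglongrightarrow> 0"
        by simp
      then have "(\<lambda>n. (x n - T (x n)) - (2 * \<eta> * \<sigma>) *\<^sub>R (C (x n) - C xs)) \<longlonglongrightarrow> 0"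
        by (rule tendsto_norm_zero_cancel)
      then have "(\<lambda>n. (x n - T (x n)) - ((x n - T (x n)) - (2 * \<eta> * \<sigma>) *\<^sub>R (C (x n) - C xs))) \<longlonglongrightarrow> 0 - 0"
        using res by (intro tendsto_diff)
      then have "(\<lambda>n. (2 * \<eta> * \<sigma>) *\<^sub>R (C (x n) - C xs)) \<longlonglongrightarrow> 0" by simp
      then have "(\<lambda>n. (1 / (2 * \<eta> * \<sigma>)) *\<^sub>R ((2 * \<eta> * \<sigma>) *\<^sub>R (C (x n) - C xs))) \<longlonglongrightarrow> (1 / (2 * \<eta> * \<sigma>)) *\<^sub>R 0"
        by (intro tendsto_scaleR tendsto_const)
      then have "(\<lambda>n. C (x n) - C xs) \<longlonglongrightarrow> 0" using e0 s0 by simp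
      then show ?thesis by (simp add: LIM_zero_iff)
    qed
    have fixpair: "c2 * (norm (0 - (2 * \<eta> * \<sigma>) *\<^sub>R (C y - C xs)))^2 + 2*\<eta>*\<gamma>*\<beta>*(norm (y - xs))^2 \<le> 0"
      if Ty: "T y = y" for y
    proof -
      have h: "(norm (T y - T xs))^2 \<le> (norm (y - xs))^2
            - k1 * (norm ((y - T y) - (xs - T xs)))^2
            - c2 * (norm ((y - T y) - (xs - T xs) - (2 * \<eta> * \<sigma>) *\<^sub>R (C y - C xs)))^2
            - 2*\<eta>*\<gamma>*\<beta>*(norm (J (y - \<gamma> *\<^sub>R C y) - J (xs - \<gamma> *\<^sub>R C xs)))^2"
        by (rule strong)
      have e1: "(y - T y) - (xs - T xs) = 0" using Ty xs(1) by simp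
      have e2: "T y - T xs = y - xs" using Ty xs(1) by simp
      show ?thesis using h unfolding e1 e2 fixJ[OF Ty] fixJ[OF xs(1)] by simp
    qed
    have Cimg: "C ` zer (op_sum B C) = {C xs}"
    proof -
      have "C y = C xs" if y: "y \<in> zer (op_sum B C)" for y
      proof -
        have Ty: "T y = y" using zer_fix y by blast
        have "0 \<le> 2*\<eta>*\<gamma>*\<beta>*(norm (y - xs))^2" using e0 g0 b0 by simp
        then have "c2 * (norm (0 - (2 * \<eta> * \<sigma>) *\<^sub>R (C y - C xs)))^2 \<le> 0" using fixpair[OF Ty] by linarith
        then have "(norm (0 - (2 * \<eta> * \<sigma>) *\<^sub>R (C y - C xs)))^2 \<le> 0" using c2p
          by (simp add: mult_le_0_iff)
        then show ?thesis using e0 s0 by simp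
      qed
      then show ?thesis using xsz by blast
    qed
    have bpos: "x \<longlonglongrightarrow> xs \<and> zer (op_sum B C) = {xs}" if bp: "\<beta> > 0"
    proof
      have "(\<lambda>n. \<beta> * (norm (J (x n - \<gamma> *\<^sub>R C (x n)) - xs))^2) \<longlonglongrightarrow> 0"
        using sums[OF xs(1)] by (blast intro: summable_LIMSEQ_zero)
      then have "(\<lambda>n. (1/\<beta>) * (\<beta> * (norm (J (x n - \<gamma> *\<^sub>R C (x n)) - xs))^2)) \<longlonglongrightarrow> (1/\<beta>) * 0"
        by (intro tendsto_mult tendsto_const)
      then have "(\<lambda>n. (norm (J (x n - \<gamma> *\<^sub>R C (x n)) - xs))^2) \<longlonglongrightarrow> 0" using bp by simp
      then have "(\<lambda>n. sqrt ((norm (J (x n - \<gamma> *\<^sub>R C (x n)) - xs))^2)) \<longlonglongrightarrow> sqrt 0" by (rule tendsto_real_sqrt)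
      then have "(\<lambda>n. norm (J (x n - \<gamma> *\<^sub>R C (x n)) - xs)) \<longlonglongrightarrow> 0" by simp
      then have j0: "(\<lambda>n. J (x n - \<gamma> *\<^sub>R C (x n)) - xs) \<longlonglongrightarrow> 0"
        by (rule tendsto_norm_zero_cancel)
      have "(\<lambda>n. (1/\<eta>) *\<^sub>R (x n - T (x n))) \<longlonglongrightarrow> (1/\<eta>) *\<^sub>R 0" by (intro tendsto_scaleR tendsto_const res)
      moreover have "(1/\<eta>) *\<^sub>R (x n - T (x n)) = x n - J (x n - \<gamma> *\<^sub>R C (x n))" for n
        using e0 Tf[of "x n"] by simp
      ultimately have "(\<lambda>n. x n - J (x n - \<gamma> *\<^sub>R C (x n))) \<longlonglongrightarrow> 0" by simp
      then have "(\<lambda>n. (x n - J (x n - \<gamma> *\<^sub>R C (x n))) + (J (x n - \<gamma> *\<^sub>R C (x n)) - xs)) \<longlonglongrightarrow> 0 + 0"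
        using j0 by (intro tendsto_add)
      then have "(\<lambda>n. x n - xs) \<longlonglongrightarrow> 0" by simp
      then show "x \<longlonglongrightarrow> xs" by (simp add: LIM_zero_iff)
      have "y = xs" if y: "y \<in> zer (op_sum B C)" for y
      proof -
        have Ty: "T y = y" using zer_fix y by blast
        have "0 \<le> c2 * (norm (0 - (2 * \<eta> * \<sigma>) *\<^sub>R (C y - C xs)))^2" using c2p by simp
        then have "2*\<eta>*\<gamma>*\<beta>*(norm (y - xs))^2 \<le> 0" using fixpair[OF Ty] by linarith
        then have "(norm (y - xs))^2 \<le> 0" using e0 g0 bp by (simp add: mult_le_0_iff)
        then show ?thesis by simp
      qed
      then show "zer (op_sum B C) = {xs}" using xsz by blast
    qed
    show "(\<lambda>n. norm (x n - T (x n))) \<in> o(\<lambda>n. 1 / sqrt (real n))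
          \<and> (\<exists>xs \<in> zer (op_sum B C).
               weakly_converges x xs
             \<and> (\<lambda>n. C (x n)) \<longlonglongrightarrow> C xs
             \<and> C ` zer (op_sum B C) = {C xs}
             \<and> (\<beta> > 0 \<longrightarrow> x \<longlonglongrightarrow> xs \<and> zer (op_sum B C) = {xs}))"
      using o xsz xs(2) Cconv Cimg bpos by blast
  qed
  show ?thesis using partI avg partII by blast
qed

end
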